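(* Let $G(x)=\frac{1}{(1+x)^{3/2}}-1$. Let $s,\lambda\geq 0$ and let $v\in\mathbb{A}^s_\lambda$ be real-valued with $4K_s|v|_{0,\lambda}<1$. Then $$|G(v)|_{s,\lambda}\leq 18K_s|v|_{s,\lambda}.$$
   Context: Let $\mathbb{T}=\mathbb{R}/2\pi\mathbb{Z}$. For $f\in L^1(\mathbb{T})$, $\widehat f(n)=\frac{1}{2\pi}\int_{\mathbb{T}}f(x)e^{-inx}\,dx$. For $s,\lambda\geq 0$ the Wiener space $\mathbb{A}^s_\lambda$ is the space of $f\in L^1(\mathbb{T})$ with finite norm $|f|_{s,\lambda}:=\sum_{n\in\mathbb{Z}}(1+|n|)^s e^{\lambda|n|}|\widehat f(n)|$. The constant $K_s$ is $K_s=1$ for $0<s\leq 1$ and $K_s=2^{s-1}$ for $s=0$ or $s>1$. *)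

theory Defs
  imports "HOL-Analysis.Analysis"
begin

text \<open>Functions on the torus R/2piZ are represented by their restriction to [0, 2pi].
  Membership in L^1(T) is set-integrability on [0, 2pi] w.r.t. Lebesgue measure.\<close>

definition in_L1_torus :: "(real \<Rightarrow> real) \<Rightarrow> bool" where
  "in_L1_torus f \<longleftrightarrow> set_integrable lborel {0..2*pi} f"

definition fourier_coeff :: "(real \<Rightarrow> real) \<Rightarrow> int \<Rightarrow> complex" where
  "fourier_coeff f n =
     complex_of_real (1 / (2*pi)) *
     (LINT x:{0..2*pi}|lborel. complex_of_real (f x) * exp (- \<i> * of_int n * of_real x))"

text \<open>Wiener norm, valued in [0, infinity]; f is in A^s_lambda iff it is in L^1 and this is finite.\<close>
definition wiener_norm :: "real \<Rightarrow> real \<Rightarrow> (real \<Rightarrow> real) \<Rightarrow> ennreal" where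
  "wiener_norm s lam f =
     (\<integral>\<^sup>+ n. ennreal ((1 + real_of_int \<bar>n\<bar>) powr s * exp (lam * real_of_int \<bar>n\<bar>)
                         * cmod (fourier_coeff f n)) \<partial>count_space (UNIV :: int set))"

definition K_const :: "real \<Rightarrow> real" where
  "K_const s = (if 0 < s \<and> s \<le> 1 then 1 else 2 powr (s - 1))"

definition G_fun :: "real \<Rightarrow> real" where
  "G_fun x = 1 / ((1 + x) powr (3/2)) - 1"

end

theory Submission
  imports Defs
begin

abbreviation II :: "real set" where "II \<equiv> {0..2*pi}"

definition cf :: "(real \<Rightarrow> complex) \<Rightarrow> int \<Rightarrow> complex" where
 "cf F n = complex_of_real (1/(2*pi)) * (LINT x:II|lborel. F x * exp (- \<i> * of_int n * of_real x))"

lemma fourier_coeff_cf: "fourier_coeff f = cf (\<lambda>x. complex_of_real (f x))"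
  by (simp add: fun_eq_iff fourier_coeff_def cf_def)

lemma emeasure_II: "emeasure lborel II < \<infinity>"
  by simp

lemma set_integrable_bounded:
  fixes h :: "real \<Rightarrow> 'b::{banach, second_countable_topology}"
  assumes "set_borel_measurable lborel A h" "emeasure lborel A < \<infinity>" "A \<in> sets lborel"
    and "AE x in lborel. x \<in> A \<longrightarrow> norm (h x) \<le> B"
  shows "set_integrable lborel A h"
proof -
  have i1: "integrable lborel (\<lambda>x. B * indicat_real A x)"
    using integrable_real_indicator[OF assms(3,2)] by simp
  have ae: "AE x in lborel. norm (norm (indicat_real A x *\<^sub>R h x)) \<le> norm (B * indicat_real A x)"
    using assms(4) by eventually_elim (auto simp: indicator_def)
  have m2: "(\<lambda>x. norm (indicat_real A x *\<^sub>R h x)) \<in> borel_measurable lborel"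
    using assms(1) unfolding set_borel_measurable_def by (rule measurable_compose[OF _ borel_measurable_norm])
  have "integrable lborel (\<lambda>x. norm (indicat_real A x *\<^sub>R h x))"
    by (rule Bochner_Integration.integrable_bound[OF i1 m2 ae])
  then show ?thesis
    unfolding set_integrable_def
    using integrable_norm_iff[of "\<lambda>x. indicat_real A x *\<^sub>R h x" lborel] assms(1)
    unfolding set_borel_measurable_def by blast
qed

lemma set_integrable_mult_bounded:
  fixes w h :: "real \<Rightarrow> complex"
  assumes "set_integrable lborel A w" "h \<in> borel_measurable borel"
    and "AE x in lborel. x \<in> A \<longrightarrow> norm (h x) \<le> B"
  shows "set_integrable lborel A (\<lambda>x. w x * h x)"
proof -
  have m: "set_borel_measurable lborel A w" using assms(1) 
    by (simp add: set_borel_measurable_def set_integrable_def)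
  have "integrable lborel (\<lambda>x. B *\<^sub>R (indicat_real A x *\<^sub>R w x))"
    using assms(1) unfolding set_integrable_def by (intro integrable_scaleR_right)
  moreover have "(\<lambda>x. indicat_real A x *\<^sub>R (w x * h x)) \<in> borel_measurable lborel"
  proof -
    have eq: "(\<lambda>x. indicat_real A x *\<^sub>R (w x * h x)) = (\<lambda>x. (indicat_real A x *\<^sub>R w x) * h x)"
      by (simp add: fun_eq_iff indicator_def)
    have m1: "(\<lambda>x. indicat_real A x *\<^sub>R w x) \<in> borel_measurable lborel"
      using m by (simp add: set_borel_measurable_def)
    have h1: "h \<in> borel_measurable lborel" using assms(2) by simp
    show ?thesis unfolding eq by (rule borel_measurable_times[OF m1 h1])
  qed
  moreover have "AE x in lborel. norm (indicat_real A x *\<^sub>R (w x * h x)) \<le> norm (B *\<^sub>R (indicat_real A x *\<^sub>R w x))"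
    using assms(3) apply eventually_elim
    apply (auto simp: indicator_def norm_mult)
    by (smt (verit, ccfv_SIG) mult.commute mult_right_mono norm_ge_zero)
  ultimately show ?thesis
    unfolding set_integrable_def by (rule Bochner_Integration.integrable_bound)
qed

lemma set_integral_suminf:
  fixes f :: "nat \<Rightarrow> real \<Rightarrow> complex" and h :: "real \<Rightarrow> real"
  assumes meas: "\<And>k. set_borel_measurable lborel A (f k)"
  assumes h: "set_integrable lborel A h"
  assumes bnd: "\<And>k. AE x in lborel. x \<in> A \<longrightarrow> norm (f k x) \<le> c k * h x"
  assumes c: "summable c" and c0: "\<And>k. c k \<ge> 0"
  shows "set_integrable lborel A (\<lambda>x. \<Sum>k. f k x)"
    and "(\<lambda>k. LINT x:A|lborel. f k x) sums (LINT x:A|lborel. (\<Sum>k. f k x))"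
proof -
  define g where "g k x = indicat_real A x *\<^sub>R f k x" for k x
  define H where "H x = norm (indicat_real A x *\<^sub>R h x)" for x
  have Hint: "integrable lborel H"
    using h unfolding H_def set_integrable_def by (rule integrable_norm)
  have gm: "g k \<in> borel_measurable lborel" for k
    using meas[of k] unfolding g_def set_borel_measurable_def by simp
  have gb: "AE x in lborel. norm (g k x) \<le> c k * H x" for k
    using bnd[of k] apply eventually_elim
    apply (auto simp: g_def H_def indicator_def)
    by (smt (verit) c0 mult_left_mono)
  have gi: "integrable lborel (g k)" for k
  proof (rule Bochner_Integration.integrable_bound[OF _ gm])
    show "integrable lborel (\<lambda>x. c k * H x)" using Hint by simp
    show "AE x in lborel. norm (g k x) \<le> norm (c k * H x)"
      using gb[of k] by eventually_elim (auto simp: H_def c0)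
  qed
  have ae: "AE x in lborel. summable (\<lambda>k. norm (g k x))"
  proof -
    have "AE x in lborel. \<forall>k. norm (g k x) \<le> c k * H x"
      using gb by (simp add: AE_all_countable)
    then show ?thesis
    proof eventually_elim
      case (elim x)
      show ?case
        by (rule summable_comparison_test[of _ "\<lambda>k. c k * H x"])
           (use elim c in \<open>auto intro!: summable_mult2\<close>)
    qed
  qed
  have si: "summable (\<lambda>k. LINT x|lborel. norm (g k x))"
  proof (rule summable_comparison_test[of _ "\<lambda>k. c k * (LINT x|lborel. H x)"])
    show "summable (\<lambda>k. c k * integral\<^sup>L lborel H)" using c by (rule summable_mult2)
    show "\<exists>N. \<forall>n\<ge>N. norm (LINT x|lborel. norm (g n x)) \<le> c n * integral\<^sup>L lborel H"
    proof (intro exI allI impI)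
      fix n :: nat
      have "(LINT x|lborel. norm (g n x)) \<le> (LINT x|lborel. c n * H x)"
        using gb[of n] gi[of n] Hint by (intro integral_mono_AE) auto
      then show "norm (LINT x|lborel. norm (g n x)) \<le> c n * integral\<^sup>L lborel H"
        by simp
    qed
  qed
  have eqS: "(\<lambda>x. \<Sum>k. g k x) = (\<lambda>x. indicat_real A x *\<^sub>R (\<Sum>k. f k x))"
    by (auto simp: fun_eq_iff g_def indicator_def)
  show "set_integrable lborel A (\<lambda>x. \<Sum>k. f k x)"
    using integrable_suminf[OF gi ae si] unfolding eqS set_integrable_def .
  show "(\<lambda>k. LINT x:A|lborel. f k x) sums (LINT x:A|lborel. (\<Sum>k. f k x))"
  proof -
    have "(\<lambda>k. integral\<^sup>L lborel (g k)) sums integral\<^sup>L lborel (\<lambda>x. indicat_real A x *\<^sub>R (\<Sum>k. f k x))"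
      using sums_integral[OF gi ae si] unfolding eqS .
    moreover have "g k = (\<lambda>x. indicat_real A x *\<^sub>R f k x)" for k by (simp add: g_def fun_eq_iff)
    ultimately show ?thesis unfolding set_lebesgue_integral_def by simp
  qed
qed

lemma exp_vderiv:
  fixes c :: complex
  assumes "c \<noteq> 0"
  shows "((\<lambda>x::real. exp (c * of_real x) / c) has_vector_derivative exp (c * of_real x)) (at x within S)"
  apply (rule has_vector_derivative_eq_rhs)
   apply (rule field_vector_diff_chain_within[unfolded o_def, where g="\<lambda>z. exp (c*z) / c"])
    apply (rule has_vector_derivative_of_real) apply (rule DERIV_ident)
  using assms apply (auto intro!: derivative_eq_intros)
  done

lemma cf_int: "(LINT x:II|lborel. F x * exp (- \<i> * of_int n * of_real x)) = of_real (2*pi) * cf F n"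
  by (simp add: cf_def)

lemma cf_one: "cf (\<lambda>x. 1) n = (if n = 0 then 1 else 0)"
proof (cases "n = 0")
  case True
  have "(LINT x:II|lborel. (1::complex)) = of_real (2*pi)"
    by (subst set_integral_const) (auto simp: scaleR_conv_of_real)
  then show ?thesis using True by (simp add: cf_def)
next
  case False
  define c where "c = - \<i> * of_int n"
  have c0: "c \<noteq> 0" using False by (simp add: c_def)
  have ci: "set_integrable lborel II (\<lambda>x. exp (c * of_real x))"
    by (intro borel_integrable_atLeastAtMost' continuous_intros)
  have "((\<lambda>x. exp (c * of_real x)) has_integral (exp (c * of_real (2*pi)) / c - exp (c * of_real 0) / c)) II"
    by (rule fundamental_theorem_of_calculus) (auto intro!: exp_vderiv c0)
  moreover have "exp (c * of_real (2*pi)) = 1"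
  proof -
    have "exp (c * of_real (2*pi)) = exp ((2 * of_int (-n) * pi) * \<i>)"
      by (simp add: c_def algebra_simps)
    also have "\<dots> = 1" by (rule exp_integer_2pi) simp
    finally show ?thesis .
  qed
  ultimately have "((\<lambda>x. exp (c * of_real x)) has_integral 0) II" by simp
  then have "(LINT x:II|lborel. exp (c * of_real x)) = 0"
    using set_borel_integral_eq_integral(2)[OF ci] by (simp add: integral_unique)
  then show ?thesis using False by (simp add: cf_def c_def)
qed

definition SS :: "(int \<Rightarrow> complex) \<Rightarrow> real \<Rightarrow> complex" where
  "SS b x = (\<Sum>k. b (int_decode k) * exp (\<i> * of_int (int_decode k) * of_real x))"

abbreviation asum :: "(int \<Rightarrow> complex) \<Rightarrow> bool" where
  "asum b \<equiv> summable (\<lambda>k. norm (b (int_decode k)))"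

lemma SS_summable:
  assumes "asum b"
  shows "summable (\<lambda>k. norm (b (int_decode k) * exp (\<i> * of_int (int_decode k) * of_real x)))"
proof -
  have "norm (exp (\<i> * of_int m * of_real x)) = 1" for m :: int
    by (metis mult.commute mult.left_commute norm_exp_i_times of_real_of_int_eq of_real_mult)
  then show ?thesis using assms by (simp add: norm_mult)
qed

lemma norm_SS:
  assumes "asum b"
  shows "norm (SS b x) \<le> (\<Sum>k. norm (b (int_decode k)))"
proof -
  have e: "norm (exp (\<i> * of_int m * of_real x)) = 1" for m :: int
    by (metis mult.commute mult.left_commute norm_exp_i_times of_real_of_int_eq of_real_mult)
  have "norm (SS b x) \<le> (\<Sum>k. norm (b (int_decode k) * exp (\<i> * of_int (int_decode k) * of_real x)))"
    unfolding SS_def by (rule summable_norm[OF SS_summable[OF assms]])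
  also have "\<dots> = (\<Sum>k. norm (b (int_decode k)))" by (simp add: norm_mult e)
  finally show ?thesis .
qed

lemma SS_measurable[measurable]: "SS b \<in> borel_measurable borel"
  unfolding SS_def[abs_def] by measurable

lemma sbm_mult:
  fixes F g :: "real \<Rightarrow> complex"
  assumes "set_borel_measurable lborel A F" "g \<in> borel_measurable borel"
  shows "set_borel_measurable lborel A (\<lambda>x. F x * g x)"
proof -
  have eq: "(\<lambda>x. indicat_real A x *\<^sub>R (F x * g x)) = (\<lambda>x. (indicat_real A x *\<^sub>R F x) * g x)"
    by (simp add: fun_eq_iff indicator_def)
  have m1: "(\<lambda>x. indicat_real A x *\<^sub>R F x) \<in> borel_measurable lborel"
    using assms(1) by (simp add: set_borel_measurable_def)
  have h1: "g \<in> borel_measurable lborel" using assms(2) by simp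
  show ?thesis unfolding set_borel_measurable_def eq by (rule borel_measurable_times[OF m1 h1])
qed

lemma sbm_cmult:
  fixes F :: "real \<Rightarrow> complex"
  assumes "set_borel_measurable lborel A F"
  shows "set_borel_measurable lborel A (\<lambda>x. c * F x)"
  using sbm_mult[OF assms, of "\<lambda>_. c"] by (simp add: mult.commute)

lemma si_measurable:
  assumes "set_integrable lborel A (F :: real \<Rightarrow> complex)"
  shows "set_borel_measurable lborel A F"
  using assms by (simp add: set_borel_measurable_def set_integrable_def)

lemma cf_mult_SS:
  fixes F :: "real \<Rightarrow> complex"
  assumes F: "set_integrable lborel II F" and b: "asum b"
  shows "set_integrable lborel II (\<lambda>x. F x * SS b x)"
    and "(\<lambda>k. b (int_decode k) * cf F (n - int_decode k)) sums cf (\<lambda>x. F x * SS b x) n"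
proof -
  show "set_integrable lborel II (\<lambda>x. F x * SS b x)"
    by (rule set_integrable_mult_bounded[OF F SS_measurable]) (use norm_SS[OF b] in auto)
  define f where "f k x = b (int_decode k) * (F x * exp (- \<i> * of_int (n - int_decode k) * of_real x))" for k x
  have meas: "set_borel_measurable lborel II (f k)" for k
    unfolding f_def by (intro sbm_cmult sbm_mult si_measurable[OF F]) measurable
  have e: "norm (exp (- \<i> * of_int m * of_real x)) = 1" for m :: int and x :: real
  proof -
    have "- \<i> * of_int m * of_real x = \<i> * of_real (- (of_int m * x))" by simp
    then show ?thesis by (metis norm_exp_i_times)
  qed
  have bnd: "AE x in lborel. x \<in> II \<longrightarrow> norm (f k x) \<le> norm (b (int_decode k)) * norm (F x)" for k
    by (auto simp: f_def norm_mult e)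
  have hs: "set_integrable lborel II (\<lambda>x. norm (F x))" using F by (rule set_integrable_norm)
  note GI = set_integral_suminf[OF meas hs bnd b]
  have sumf: "(\<Sum>k. f k x) = F x * SS b x * exp (- \<i> * of_int n * of_real x)" for x
  proof -
    have "(\<Sum>k. f k x) = (\<Sum>k. (b (int_decode k) * exp (\<i> * of_int (int_decode k) * of_real x)) * (F x * exp (- \<i> * of_int n * of_real x)))"
    proof (rule suminf_cong)
      fix k
      have "exp (- \<i> * of_int (n - int_decode k) * of_real x) = exp (\<i> * of_int (int_decode k) * of_real x) * exp (- \<i> * of_int n * of_real x)"
        by (simp add: exp_add[symmetric] algebra_simps)
      then show "f k x = (b (int_decode k) * exp (\<i> * of_int (int_decode k) * of_real x)) * (F x * exp (- \<i> * of_int n * of_real x))"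
        by (simp add: f_def)
    qed
    also have "\<dots> = SS b x * (F x * exp (- \<i> * of_int n * of_real x))"
      unfolding SS_def
      by (rule suminf_mult2[symmetric]) (rule summable_norm_cancel[OF SS_summable[OF b]])
    finally show ?thesis by simp
  qed
  have intf: "(LINT x:II|lborel. f k x) = of_real (2*pi) * (b (int_decode k) * cf F (n - int_decode k))" for k
  proof -
    have "(LINT x:II|lborel. F x * exp (- \<i> * of_int (n - int_decode k) * of_real x)) = of_real (2*pi) * cf F (n - int_decode k)"
      by (rule cf_int)
    then show ?thesis unfolding f_def by (simp only: set_integral_mult_right) simp
  qed
  have "(\<lambda>k. of_real (2*pi) * (b (int_decode k) * cf F (n - int_decode k))) sums (of_real (2*pi) * cf (\<lambda>x. F x * SS b x) n)"
    using GI(2) unfolding intf sumf cf_int by simp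
  then have "(\<lambda>k. complex_of_real (1/(2*pi)) * (of_real (2*pi) * (b (int_decode k) * cf F (n - int_decode k)))) sums (complex_of_real (1/(2*pi)) * (of_real (2*pi) * cf (\<lambda>x. F x * SS b x) n))"
    by (rule sums_mult)
  then show "(\<lambda>k. b (int_decode k) * cf F (n - int_decode k)) sums cf (\<lambda>x. F x * SS b x) n"
    by (simp add: field_simps)
qed

lemma si_const: "set_integrable lborel II (\<lambda>x. c :: complex)"
  by (rule set_integrable_bounded[where B="norm c"]) (auto simp: set_borel_measurable_def)

lemma cf_SS:
  assumes b: "asum b"
  shows "cf (SS b) n = b n"
proof -
  have "(\<lambda>k. b (int_decode k) * cf (\<lambda>x. 1) (n - int_decode k)) sums cf (\<lambda>x. 1 * SS b x) n"
    by (rule cf_mult_SS(2)[OF si_const b])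
  moreover have "(\<lambda>k. b (int_decode k) * cf (\<lambda>x. 1) (n - int_decode k)) = (\<lambda>k. if k = int_encode n then b n else 0)"
  proof -
    have "n - int_decode k = 0 \<longleftrightarrow> k = int_encode n" for k
      by (metis eq_iff_diff_eq_0 int_decode_inverse int_encode_inverse)
    then show ?thesis by (auto simp: fun_eq_iff cf_one simp del: int_encode_eq)
  qed
  ultimately have "(\<lambda>k. if k = int_encode n then b n else 0) sums cf (SS b) n" by simp
  moreover have "(\<lambda>k. if k = int_encode n then b n else 0) sums b n"
    using sums_single[of "int_encode n" "\<lambda>_. b n"] by simp
  ultimately show ?thesis using sums_unique2 by blast
qed

inductive trigp :: "(real \<Rightarrow> complex) \<Rightarrow> bool" where
  mono: "trigp (\<lambda>x. c * exp (\<i> * of_int k * of_real x))"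
| add: "trigp P \<Longrightarrow> trigp Q \<Longrightarrow> trigp (\<lambda>x. P x + Q x)"

lemma trigp_const: "trigp (\<lambda>x. c)"
  using trigp.mono[of c 0] by simp

lemma trigp_mult: "trigp P \<Longrightarrow> trigp Q \<Longrightarrow> trigp (\<lambda>x. P x * Q x)"
proof (induction P rule: trigp.induct)
  case (mono c k)
  from mono show ?case
  proof (induction Q rule: trigp.induct)
    case (mono d j)
    have "(\<lambda>x. c * exp (\<i> * of_int k * of_real x) * (d * exp (\<i> * of_int j * of_real x)))
        = (\<lambda>x. (c*d) * exp (\<i> * of_int (k+j) * of_real x))"
      by (simp add: exp_add[symmetric] algebra_simps)
    then show ?case using trigp.mono by metis
  next
    case (add P Q)
    then show ?case by (simp add: distrib_left trigp.add)
  qed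
next
  case (add P1 P2)
  then show ?case by (simp add: distrib_right trigp.add)
qed

lemma trigp_integral:
  assumes w: "set_integrable lborel II w" and z: "\<And>n. cf w n = 0"
  shows "trigp P \<Longrightarrow> set_integrable lborel II (\<lambda>x. w x * P x) \<and> (LINT x:II|lborel. w x * P x) = 0"
proof (induction P rule: trigp.induct)
  case (mono c k)
  have e: "norm (exp (\<i> * of_int k * of_real x)) = 1" for x :: real
    by (metis mult.commute mult.left_commute norm_exp_i_times of_real_of_int_eq of_real_mult)
  have si: "set_integrable lborel II (\<lambda>x. w x * (c * exp (\<i> * of_int k * of_real x)))"
    by (rule set_integrable_mult_bounded[OF w, where B="norm c"]) (auto simp: norm_mult e)
  have "(\<lambda>x. w x * (c * exp (\<i> * of_int k * of_real x))) = (\<lambda>x. c * (w x * exp (- \<i> * of_int (-k) * of_real x)))"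
    by (simp add: fun_eq_iff)
  then have "(LINT x:II|lborel. w x * (c * exp (\<i> * of_int k * of_real x))) = c * (of_real (2*pi) * cf w (-k))"
    by (simp only: set_integral_mult_right cf_int)
  with si z show ?case by simp
next
  case (add P Q)
  then show ?case
    by (simp add: distrib_left set_integral_add)
qed

lemma trigp_linear:
  fixes h :: "complex \<Rightarrow> real"
  assumes "bounded_linear h"
  shows "trigp (\<lambda>x. complex_of_real (h (exp (\<i> * of_real x))))"
proof -
  interpret bounded_linear h by fact
  have hz: "h z = Re z * h 1 + Im z * h \<i>" for z
  proof -
    have "z = Re z *\<^sub>R 1 + Im z *\<^sub>R \<i>" by (simp add: complex_eq_iff)
    then have "h z = h (Re z *\<^sub>R 1 + Im z *\<^sub>R \<i>)" by simp
    also have "\<dots> = Re z * h 1 + Im z * h \<i>" by (simp add: add scale)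
    finally show ?thesis .
  qed
  have "(\<lambda>x. complex_of_real (h (exp (\<i> * of_real x)))) =
     (\<lambda>x. ((h 1 - \<i> * h \<i>)/2) * exp (\<i> * of_int 1 * of_real x) + ((h 1 + \<i> * h \<i>)/2) * exp (\<i> * of_int (-1) * of_real x))"
  proof
    fix x :: real
    have c1: "exp (\<i> * of_real x) = complex_of_real (cos x) + \<i> * of_real (sin x)"
      by (simp add: complex_eq_iff Re_exp Im_exp)
    have c2: "exp (\<i> * of_int (-1) * of_real x) = complex_of_real (cos x) - \<i> * of_real (sin x)"
      by (simp add: complex_eq_iff Re_exp Im_exp)
    show "complex_of_real (h (exp (\<i> * of_real x))) =
      ((h 1 - \<i> * h \<i>)/2) * exp (\<i> * of_int 1 * of_real x) + ((h 1 + \<i> * h \<i>)/2) * exp (\<i> * of_int (-1) * of_real x)"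
      unfolding c2 using c1 hz[of "exp (\<i> * of_real x)"]
      by (simp add: complex_eq_iff Re_exp Im_exp algebra_simps; simp add: field_simps)
  qed
  then show ?thesis by (simp only: trigp.add trigp.mono)
qed

lemma trigp_rpf:
  fixes h :: "complex \<Rightarrow> real"
  shows "real_polynomial_function h \<Longrightarrow> trigp (\<lambda>x. complex_of_real (h (exp (\<i> * of_real x))))"
proof (induction h rule: real_polynomial_function.induct)
  case (linear f)
  then show ?case by (rule trigp_linear)
next
  case (const c)
  then show ?case by (rule trigp_const)
next
  case (add f g)
  then show ?case by (simp add: trigp.add)
next
  case (mult f g)
  then show ?case by (simp add: trigp_mult)
qed

lemma trigp_poly:
  fixes p :: "complex \<Rightarrow> complex"
  assumes "polynomial_function p"
  shows "trigp (\<lambda>x. p (exp (\<i> * of_real x)))"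
proof -
  have r: "real_polynomial_function (Re \<circ> p)" and i: "real_polynomial_function (Im \<circ> p)"
    using assms unfolding polynomial_function_def by (auto intro: bounded_linear_Re bounded_linear_Im)
  have t1: "trigp (\<lambda>x. complex_of_real (Re (p (exp (\<i> * of_real x)))))"
    using trigp_rpf[OF r] by (simp add: o_def)
  have t2: "trigp (\<lambda>x. \<i> * complex_of_real (Im (p (exp (\<i> * of_real x)))))"
    using trigp_mult[OF trigp_const trigp_rpf[OF i]] by (simp add: o_def)
  have "(\<lambda>x. p (exp (\<i> * of_real x))) = (\<lambda>x. complex_of_real (Re (p (exp (\<i> * of_real x)))) + \<i> * complex_of_real (Im (p (exp (\<i> * of_real x)))))"
    by (simp add: fun_eq_iff complex_eq_iff)
  then show ?thesis using trigp.add[OF t1 t2] by simp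
qed

lemma norm_E: "norm (exp (\<i> * complex_of_real x)) = 1"
  by (rule norm_exp_i_times)

lemma cont_integral_zero:
  fixes w :: "real \<Rightarrow> complex" and \<phi> :: "complex \<Rightarrow> complex"
  assumes w: "set_integrable lborel II w" and z: "\<And>n. cf w n = 0"
    and \<phi>: "continuous_on (sphere 0 1) \<phi>"
  shows "set_integrable lborel II (\<lambda>x. w x * \<phi> (exp (\<i> * of_real x)))"
    and "(LINT x:II|lborel. w x * \<phi> (exp (\<i> * of_real x))) = 0"
proof -
  define E where "E x = exp (\<i> * complex_of_real x)" for x :: real
  have Es: "E x \<in> sphere 0 1" for x by (simp add: E_def norm_E)
  have Ec: "continuous_on UNIV E" unfolding E_def by (intro continuous_intros)
  have gc: "continuous_on UNIV (\<lambda>x. \<phi> (E x))"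
    by (rule continuous_on_compose2[OF \<phi> Ec]) (use Es in auto)
  have gm: "(\<lambda>x. \<phi> (E x)) \<in> borel_measurable borel" using gc by (rule borel_measurable_continuous_onI)
  have "bounded (\<phi> ` sphere 0 1)"
    using compact_imp_bounded[OF compact_continuous_image[OF \<phi> compact_sphere]] .
  then obtain B where B: "\<And>z. z \<in> sphere 0 1 \<Longrightarrow> norm (\<phi> z) \<le> B"
    unfolding bounded_iff by blast
  have si: "set_integrable lborel II (\<lambda>x. w x * \<phi> (E x))"
    by (rule set_integrable_mult_bounded[OF w gm, of B]) (use B Es in auto)
  then show "set_integrable lborel II (\<lambda>x. w x * \<phi> (exp (\<i> * of_real x)))" by (simp add: E_def)
  define C where "C = (LINT x:II|lborel. norm (w x))"
  have wn: "set_integrable lborel II (\<lambda>x. norm (w x))" using w by (rule set_integrable_norm)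
  have C0: "C \<ge> 0" unfolding C_def set_lebesgue_integral_def by (intro Bochner_Integration.integral_nonneg) (auto simp: indicator_def)
  have bnd: "norm (LINT x:II|lborel. w x * \<phi> (E x)) \<le> e * C" if e: "e > 0" for e
  proof -
    obtain p where p: "polynomial_function p" and pe: "\<And>z. z \<in> sphere 0 1 \<Longrightarrow> norm (\<phi> z - p z) < e"
      using Stone_Weierstrass_polynomial_function[OF compact_sphere \<phi> e] by blast
    have tp: "trigp (\<lambda>x. p (E x))" using trigp_poly[OF p] unfolding E_def .
    note T = trigp_integral[OF w z tp]
    have eq: "(\<lambda>x. w x * (\<phi> (E x) - p (E x))) = (\<lambda>x. w x * \<phi> (E x) - w x * p (E x))"
      by (simp add: fun_eq_iff right_diff_distrib)
    have sd: "set_integrable lborel II (\<lambda>x. w x * (\<phi> (E x) - p (E x)))"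
      unfolding eq using set_integral_diff(1)[OF si conjunct1[OF T]] .
    have "(LINT x:II|lborel. w x * \<phi> (E x)) = (LINT x:II|lborel. w x * (\<phi> (E x) - p (E x)))"
      unfolding eq using set_integral_diff(2)[OF si conjunct1[OF T]] conjunct2[OF T] by simp
    also have "norm \<dots> \<le> (LINT x:II|lborel. norm (w x * (\<phi> (E x) - p (E x))))"
      by (rule set_integral_norm_bound[OF sd])
    also have "\<dots> \<le> (LINT x:II|lborel. e * norm (w x))"
    proof (rule set_integral_mono)
      show "set_integrable lborel II (\<lambda>x. norm (w x * (\<phi> (E x) - p (E x))))"
        using sd by (rule set_integrable_norm)
      show "set_integrable lborel II (\<lambda>x. e * norm (w x))"
        using wn by (rule set_integrable_mult_right)
      fix x
      show "norm (w x * (\<phi> (E x) - p (E x))) \<le> e * norm (w x)"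
        using pe[OF Es[of x]] norm_ge_zero[of "w x"] unfolding norm_mult
        by (metis less_imp_le mult.commute mult_right_mono)
    qed
    also have "\<dots> = e * C" by (simp add: C_def set_integral_mult_right)
    finally show ?thesis .
  qed
  have "norm (LINT x:II|lborel. w x * \<phi> (E x)) = 0"
  proof (rule ccontr)
    define X where "X = norm (LINT x:II|lborel. w x * \<phi> (E x))"
    assume "norm (LINT x:II|lborel. w x * \<phi> (E x)) \<noteq> 0"
    then have X0: "X > 0" unfolding X_def by simp
    define e where "e = X / (2 * (C + 1))"
    have e0: "e > 0" using X0 C0 by (simp add: e_def)
    have "X \<le> e * C" using bnd[OF e0] by (simp add: X_def)
    also have "e * C < X" using X0 C0 by (simp add: e_def field_simps) (smt (verit) mult_nonneg_nonneg)
    finally show False by simp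
  qed
  then show "(LINT x:II|lborel. w x * \<phi> (exp (\<i> * of_real x))) = 0" by (simp add: E_def)
qed

lemma E_inj:
  assumes "y \<in> {0<..<2*pi}" "t \<in> {0..2*pi}" "exp (\<i> * complex_of_real y) = exp (\<i> * complex_of_real t)"
  shows "y = t"
proof -
  have Ay: "Arg2pi (exp (\<i> * complex_of_real y)) = y"
    by (rule Arg2pi_unique[of 1]) (use assms(1) in auto)
  show ?thesis
  proof (cases "t = 2*pi")
    case True
    have "exp (\<i> * complex_of_real t) = 1"
      using True exp_integer_2pi[of 1] by (simp add: mult.commute)
    moreover have "Arg2pi 1 = 0" by (rule Arg2pi_unique[of 1 0]) auto
    ultimately have "Arg2pi (exp (\<i> * complex_of_real y)) = 0" using assms(3) by simp
    then show ?thesis using Ay assms(1) by simp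
  next
    case False
    have "Arg2pi (exp (\<i> * complex_of_real t)) = t"
      by (rule Arg2pi_unique[of 1]) (use assms(2) False in auto)
    then show ?thesis using Ay assms(3) by simp
  qed
qed

lemma interval_integral_zero:
  fixes w :: "real \<Rightarrow> complex"
  assumes w: "set_integrable lborel II w" and z: "\<And>n. cf w n = 0"
    and ab: "0 \<le> a" "a \<le> b" "b \<le> 2*pi"
  shows "integral\<^sup>L lborel (\<lambda>y. indicat_real {a..b} y *\<^sub>R w y) = 0"
proof -
  define E where "E x = exp (\<i> * complex_of_real x)" for x :: real
  have Es: "E x \<in> sphere 0 1" for x by (simp add: E_def norm_E)
  have Ec: "continuous_on UNIV E" unfolding E_def by (intro continuous_intros)
  define A where "A = E ` {a..b}"
  have Ac: "compact A" unfolding A_def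
    by (rule compact_continuous_image[OF continuous_on_subset[OF Ec] compact_Icc]) auto
  have Ane: "A \<noteq> {}" using ab by (auto simp: A_def)
  define \<phi> where "\<phi> j z = complex_of_real (max 0 (1 - real j * infdist z A))" for j :: nat and z
  have \<phi>c: "continuous_on (sphere 0 1) (\<phi> j)" for j
    unfolding \<phi>_def by (intro continuous_intros continuous_on_infdist)
  have \<phi>b: "norm (\<phi> j z) \<le> 1" for j z
    using infdist_nonneg[of z A] by (auto simp: \<phi>_def)
  define s where "s j y = indicat_real II y *\<^sub>R (w y * \<phi> j (E y))" for j y
  define f where "f y = indicat_real {a..b} y *\<^sub>R w y" for y
  define W where "W y = norm (indicat_real II y *\<^sub>R w y)" for y
  have CI: "set_integrable lborel II (\<lambda>x. w x * \<phi> j (E x))" "(LINT x:II|lborel. w x * \<phi> j (E x)) = 0" for j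
    using cont_integral_zero[OF w z \<phi>c[of j]] by (simp_all add: E_def)
  have sm: "s j \<in> borel_measurable lborel" for j
    using CI(1)[of j] unfolding s_def set_integrable_def by (rule borel_measurable_integrable)
  have wm: "(\<lambda>y. indicat_real II y *\<^sub>R w y) \<in> borel_measurable lborel"
    using w unfolding set_integrable_def by (rule borel_measurable_integrable)
  have feq: "f = (\<lambda>y. indicat_real {a..b} y *\<^sub>R (indicat_real II y *\<^sub>R w y))"
    using ab by (auto simp: fun_eq_iff f_def indicator_def)
  have fm: "f \<in> borel_measurable lborel"
    unfolding feq by (intro borel_measurable_scaleR wm) auto
  have Wi: "integrable lborel W"
    using w unfolding W_def set_integrable_def by (rule integrable_norm)
  have bound: "AE y in lborel. norm (s j y) \<le> W y" for j
  proof (rule AE_I2)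
    fix y
    show "norm (s j y) \<le> W y"
    proof (cases "y \<in> II")
      case True
      then show ?thesis
        using mult_left_le[OF \<phi>b[of j "E y"] norm_ge_zero[of "w y"]]
        by (simp add: s_def W_def norm_mult)
    next
      case False
      then show ?thesis by (simp add: s_def W_def)
    qed
  qed
  have lim: "AE y in lborel. (\<lambda>j. s j y) \<longlonglongrightarrow> f y"
    using AE_lborel_singleton[of 0] AE_lborel_singleton[of "2*pi"]
  proof eventually_elim
    case (elim y)
    show ?case
    proof (cases "y \<in> II")
      case False
      then have "y \<notin> {a..b}" using ab by auto
      then show ?thesis using False by (simp add: s_def f_def)
    next
      case yI: True
      then have y02: "y \<in> {0<..<2*pi}" using elim by auto
      show ?thesis
      proof (cases "y \<in> {a..b}")
        case True
        then have "E y \<in> A" by (simp add: A_def)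
        then have "\<phi> j (E y) = 1" for j by (simp add: \<phi>_def infdist_zero)
        then show ?thesis using True yI by (simp add: s_def f_def)
      next
        case False
        have "E y \<notin> A"
        proof
          assume "E y \<in> A"
          then obtain t where t: "t \<in> {a..b}" "E y = E t" by (auto simp: A_def)
          then have "y = t" using E_inj[OF y02, of t] ab by (auto simp: E_def)
          then show False using t False by simp
        qed
        then have d: "infdist (E y) A > 0"
          using infdist_pos_not_in_closed[OF compact_imp_closed[OF Ac]] Ane by blast
        obtain N :: nat where N: "1 / infdist (E y) A < real N" using reals_Archimedean2 by blast
        have "eventually (\<lambda>j. s j y = 0) sequentially"
          unfolding eventually_sequentially
        proof (intro exI allI impI)
          fix j assume "N \<le> j"
          then have "real N \<le> real j" by simp
          have "1 < real N * infdist (E y) A" using N d by (simp add: field_simps)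
          also have "\<dots> \<le> real j * infdist (E y) A"
            using \<open>real N \<le> real j\<close> d by (intro mult_right_mono) auto
          finally have "1 < real j * infdist (E y) A" .
          then show "s j y = 0" by (simp add: s_def \<phi>_def)
        qed
        then have "(\<lambda>j. s j y) \<longlonglongrightarrow> 0" by (rule tendsto_eventually)
        then show ?thesis using False by (simp add: f_def)
      qed
    qed
  qed
  have "(\<lambda>j. integral\<^sup>L lborel (s j)) \<longlonglongrightarrow> integral\<^sup>L lborel f"
    by (rule integral_dominated_convergence[OF fm sm Wi lim bound])
  moreover have "integral\<^sup>L lborel (s j) = 0" for j
  proof -
    have sj: "s j = (\<lambda>x. indicat_real II x *\<^sub>R (w x * \<phi> j (E x)))" by (rule ext) (simp add: s_def)
    show ?thesis using CI(2)[of j] by (simp add: sj set_lebesgue_integral_def)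
  qed
  ultimately have "(\<lambda>j. 0) \<longlonglongrightarrow> integral\<^sup>L lborel f" by simp
  then have "integral\<^sup>L lborel f = 0" by (simp add: LIMSEQ_const_iff)
  moreover have "f = (\<lambda>y. indicat_real {a..b} y *\<^sub>R w y)" by (rule ext) (simp add: f_def)
  ultimately show ?thesis by simp
qed

lemma dens_emeasure:
  fixes g :: "real \<Rightarrow> real"
  assumes g: "integrable lborel g" and A: "A \<in> sets borel"
  shows "emeasure (density lborel (\<lambda>x. ennreal (g x))) A = ennreal (\<integral>y. indicator A y * max 0 (g y) \<partial>lborel)"
proof -
  have gm: "g \<in> borel_measurable lborel" using g by (rule borel_measurable_integrable)
  have "emeasure (density lborel (\<lambda>x. ennreal (g x))) A = (\<integral>\<^sup>+x. ennreal (g x) * indicator A x \<partial>lborel)"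
    using gm A by (subst emeasure_density) (auto simp: measurable_lborel1)
  also have "\<dots> = (\<integral>\<^sup>+x. ennreal (indicator A x * max 0 (g x)) \<partial>lborel)"
    by (intro nn_integral_cong) (auto simp: indicator_def max_def ennreal_neg)
  also have "\<dots> = ennreal (\<integral>y. indicator A y * max 0 (g y) \<partial>lborel)"
  proof (rule nn_integral_eq_integral)
    have "integrable lborel (\<lambda>y. max 0 (g y) * indicator A y)"
      using A by (intro integrable_real_mult_indicator integrable_max g) auto
    then show "integrable lborel (\<lambda>y. indicator A y * max 0 (g y))" by (simp add: mult.commute)
  qed auto
  finally show ?thesis .
qed

lemma AE_zero_of_Ioi:
  fixes u :: "real \<Rightarrow> real"
  assumes int: "integrable lborel u" and eq: "\<And>x. integral\<^sup>L lborel (\<lambda>y. indicator {x<..} y * u y) = 0"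
  shows "AE x in lborel. u x = 0"
proof -
  have nu: "integrable lborel (\<lambda>x. - u x)" using int by simp
  have split: "(\<integral>y. indicator A y * u y \<partial>lborel) =
      (\<integral>y. indicator A y * max 0 (u y) \<partial>lborel) - (\<integral>y. indicator A y * max 0 (- u y) \<partial>lborel)"
    if A: "A \<in> sets borel" for A
  proof -
    have i1: "integrable lborel (\<lambda>y. indicator A y * max 0 (u y))"
      using integrable_real_mult_indicator[OF _ integrable_max[OF integrable_zero int], of A] A
      by (simp add: mult.commute)
    have i2: "integrable lborel (\<lambda>y. indicator A y * max 0 (- u y))"
      using integrable_real_mult_indicator[OF _ integrable_max[OF integrable_zero nu], of A] A
      by (simp add: mult.commute)
    have "(\<integral>y. indicator A y * max 0 (u y) \<partial>lborel) - (\<integral>y. indicator A y * max 0 (- u y) \<partial>lborel)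
        = (\<integral>y. indicator A y * max 0 (u y) - indicator A y * max 0 (- u y) \<partial>lborel)"
      using Bochner_Integration.integral_diff[OF i1 i2] by simp
    also have "\<dots> = (\<integral>y. indicator A y * u y \<partial>lborel)"
      by (intro Bochner_Integration.integral_cong) (auto simp: max_def indicator_def)
    finally show ?thesis by simp
  qed
  define M where "M = density lborel (\<lambda>x. ennreal (u x))"
  define N where "N = density lborel (\<lambda>x. ennreal (- u x))"
  have MA: "emeasure M A = ennreal (\<integral>y. indicator A y * max 0 (u y) \<partial>lborel)" if "A \<in> sets borel" for A
    unfolding M_def by (rule dens_emeasure[OF int that])
  have NA: "emeasure N A = ennreal (\<integral>y. indicator A y * max 0 (- u y) \<partial>lborel)" if "A \<in> sets borel" for A
    unfolding N_def by (rule dens_emeasure[OF nu that])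
  have MN: "M = N"
  proof (rule measure_eqI_lessThan)
    show "sets M = sets borel" "sets N = sets borel" by (simp_all add: M_def N_def)
    fix x :: real
    show "emeasure M {x<..} < \<infinity>" by (simp add: MA)
    show "emeasure M {x<..} = emeasure N {x<..}"
      using split[of "{x<..}"] eq[of x] by (simp add: MA NA)
  qed
  have "set_lebesgue_integral lborel A u = set_lebesgue_integral lborel A (\<lambda>_. 0)" if A: "A \<in> sets lborel" for A
  proof -
    have A': "A \<in> sets borel" using A by simp
    have n1: "(\<integral>y. indicator A y * max 0 (u y) \<partial>lborel) \<ge> 0"
      by (intro Bochner_Integration.integral_nonneg) (auto simp: indicator_def)
    have n2: "(\<integral>y. indicator A y * max 0 (- u y) \<partial>lborel) \<ge> 0"
      by (intro Bochner_Integration.integral_nonneg) (auto simp: indicator_def)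
    have "(\<integral>y. indicator A y * max 0 (u y) \<partial>lborel) = (\<integral>y. indicator A y * max 0 (- u y) \<partial>lborel)"
      using MA[OF A'] NA[OF A'] MN n1 n2 by (metis ennreal_inj)
    then show ?thesis using split[OF A'] by (simp add: set_lebesgue_integral_def)
  qed
  then have "AE x in lborel. u x = (\<lambda>_. 0) x"
    by (intro density_unique_real[OF int]) auto
  then show ?thesis by simp
qed

lemma cf_cmult: "cf (\<lambda>x. c * F x) n = c * cf F n"
proof -
  have "(\<lambda>x. c * F x * exp (- \<i> * of_int n * of_real x)) = (\<lambda>x. c * (F x * exp (- \<i> * of_int n * of_real x)))"
    by (simp add: fun_eq_iff)
  then show ?thesis unfolding cf_def by (simp add: set_integral_mult_right)
qed

lemma cf_zero_AE_Re:
  fixes w :: "real \<Rightarrow> complex"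
  assumes w: "set_integrable lborel II w" and z: "\<And>n. cf w n = 0"
  shows "AE x in lborel. x \<in> II \<longrightarrow> Re (w x) = 0"
proof -
  define u where "u y = indicator II y * Re (w y)" for y
  have wi: "integrable lborel (\<lambda>y. indicat_real II y *\<^sub>R w y)" using w by (simp add: set_integrable_def)
  have ui: "integrable lborel u"
  proof -
    have "u = (\<lambda>y. Re (indicat_real II y *\<^sub>R w y))" by (rule ext) (simp add: u_def)
    then show ?thesis using integrable_Re[OF wi] by simp
  qed
  have eq: "integral\<^sup>L lborel (\<lambda>y. indicator {x<..} y * u y) = 0" for x
  proof -
    define a where "a = min (max x 0) (2*pi)"
    have a: "0 \<le> a" "a \<le> 2*pi" by (auto simp: a_def)
    have wi2: "integrable lborel (\<lambda>y. indicat_real {a..2*pi} y *\<^sub>R w y)"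
    proof -
      have "integrable lborel (\<lambda>y. indicat_real {a..2*pi} y *\<^sub>R (indicat_real II y *\<^sub>R w y))"
        by (intro integrable_mult_indicator wi) auto
      moreover have "(\<lambda>y. indicat_real {a..2*pi} y *\<^sub>R (indicat_real II y *\<^sub>R w y)) = (\<lambda>y. indicat_real {a..2*pi} y *\<^sub>R w y)"
        using a by (auto simp: fun_eq_iff indicator_def)
      ultimately show ?thesis by simp
    qed
    have i1: "integrable lborel (\<lambda>y. indicator {x<..} y * u y)"
      using integrable_real_mult_indicator[OF _ ui, of "{x<..}"] by (simp add: mult.commute)
    have i2: "integrable lborel (\<lambda>y. Re (indicat_real {a..2*pi} y *\<^sub>R w y))"
      using integrable_Re[OF wi2] .
    have "AE y in lborel. indicator {x<..} y * u y = Re (indicat_real {a..2*pi} y *\<^sub>R w y)"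
      using AE_lborel_singleton[of a]
    proof eventually_elim
      case (elim y)
      have "(x < y \<and> 0 \<le> y \<and> y \<le> 2*pi) \<longleftrightarrow> (a \<le> y \<and> y \<le> 2*pi)"
        using elim by (auto simp: a_def min_def max_def split: if_splits)
      then show ?case by (auto simp: u_def indicator_def)
    qed
    then have "integral\<^sup>L lborel (\<lambda>y. indicator {x<..} y * u y) = integral\<^sup>L lborel (\<lambda>y. Re (indicat_real {a..2*pi} y *\<^sub>R w y))"
      by (intro integral_cong_AE borel_measurable_integrable[OF i1] borel_measurable_integrable[OF i2])
    also have "\<dots> = Re (integral\<^sup>L lborel (\<lambda>y. indicat_real {a..2*pi} y *\<^sub>R w y))"
      by (rule integral_Re[OF wi2])
    also have "\<dots> = 0" using interval_integral_zero[OF w z a(1) a(2) order_refl] by simp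
    finally show ?thesis .
  qed
  have "AE y in lborel. u y = 0" by (rule AE_zero_of_Ioi[OF ui eq])
  then show ?thesis by eventually_elim (auto simp: u_def)
qed

lemma cf_zero_AE:
  fixes w :: "real \<Rightarrow> complex"
  assumes w: "set_integrable lborel II w" and z: "\<And>n. cf w n = 0"
  shows "AE x in lborel. x \<in> II \<longrightarrow> w x = 0"
proof -
  have w2: "set_integrable lborel II (\<lambda>x. - \<i> * w x)"
    by (rule set_integrable_mult_right) (rule w)
  have z2: "cf (\<lambda>x. - \<i> * w x) n = 0" for n
  proof -
    have "cf (\<lambda>x. - \<i> * w x) n = - \<i> * cf w n" by (rule cf_cmult)
    then show ?thesis using z by simp
  qed
  have 1: "AE x in lborel. x \<in> II \<longrightarrow> Re (w x) = 0" by (rule cf_zero_AE_Re[OF w z])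
  have 2: "AE x in lborel. x \<in> II \<longrightarrow> Re (- \<i> * w x) = 0" by (rule cf_zero_AE_Re[OF w2 z2])
  from 1 2 show ?thesis by eventually_elim (auto simp: complex_eq_iff)
qed

definition W :: "real \<Rightarrow> real \<Rightarrow> int \<Rightarrow> real" where
  "W s lam n = (1 + real_of_int \<bar>n\<bar>) powr s * exp (lam * real_of_int \<bar>n\<bar>)"

definition wn :: "real \<Rightarrow> real \<Rightarrow> (int \<Rightarrow> complex) \<Rightarrow> ennreal" where
  "wn s lam b = (\<integral>\<^sup>+ n. ennreal (W s lam n * cmod (b n)) \<partial>count_space UNIV)"

lemma wiener_norm_wn: "wiener_norm s lam f = wn s lam (fourier_coeff f)"
  by (simp add: wiener_norm_def wn_def W_def)

lemma W_pos: "W s lam n > 0"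
  by (simp add: W_def)

lemma W0: "W 0 lam n = exp (lam * real_of_int \<bar>n\<bar>)"
  by (simp add: W_def)

lemma BR: "(\<Sum>k. f (int_decode k)) = (\<integral>\<^sup>+m. f m \<partial>count_space UNIV)"
proof -
  have "(\<Sum>k. f (int_decode k)) = (\<integral>\<^sup>+k. f (int_decode k) \<partial>count_space UNIV)"
    by (rule nn_integral_count_space_nat[symmetric])
  also have "\<dots> = (\<integral>\<^sup>+m. f m \<partial>count_space UNIV)"
    by (rule nn_integral_bij_count_space) (rule bij_int_decode)
  finally show ?thesis .
qed

lemma shift_int: "(\<integral>\<^sup>+n. f (n - m) \<partial>count_space UNIV) = (\<integral>\<^sup>+n. f n \<partial>count_space (UNIV :: int set))"
proof (rule nn_integral_bij_count_space)
  show "bij_betw (\<lambda>n. n - m) UNIV UNIV"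
    by (rule bij_betwI[where g="\<lambda>n. n + m"]) auto
qed

lemma swap_int:
  fixes F :: "int \<Rightarrow> int \<Rightarrow> ennreal"
  shows "(\<integral>\<^sup>+n. (\<integral>\<^sup>+m. F n m \<partial>count_space UNIV) \<partial>count_space UNIV) =
         (\<integral>\<^sup>+m. (\<integral>\<^sup>+n. F n m \<partial>count_space UNIV) \<partial>count_space UNIV)"
proof -
  have "(\<integral>\<^sup>+n. (\<integral>\<^sup>+m. F n m \<partial>count_space UNIV) \<partial>count_space UNIV) =
        (\<integral>\<^sup>+n. (\<Sum>k. F n (int_decode k)) \<partial>count_space UNIV)"
    by (simp add: BR)
  also have "\<dots> = (\<Sum>k. (\<integral>\<^sup>+n. F n (int_decode k) \<partial>count_space UNIV))"
    by (rule nn_integral_suminf) simp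
  also have "\<dots> = (\<integral>\<^sup>+m. (\<integral>\<^sup>+n. F n m \<partial>count_space UNIV) \<partial>count_space UNIV)"
    by (rule BR)
  finally show ?thesis .
qed

lemma powr_sum_le:
  fixes x y s :: real
  assumes x: "x > 0" and y: "y > 0" and s: "s \<ge> 0"
  shows "(x + y) powr s \<le> K_const s * (x powr s + y powr s)"
proof (cases "s = 0")
  case True
  then show ?thesis using x y by (simp add: K_const_def powr_minus)
next
  case False
  then have s0: "s > 0" using s by simp
  show ?thesis
  proof (cases "s \<le> 1")
    case True
    have K: "K_const s = 1" using s0 True by (simp add: K_const_def)
    define t where "t = x / (x + y)"
    define r where "r = y / (x + y)"
    have t01: "0 \<le> t" "t \<le> 1" using x y by (auto simp: t_def)
    have r01: "0 \<le> r" "r \<le> 1" using x y by (auto simp: r_def)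
    have tr: "t + r = 1" using x y by (simp add: t_def r_def add_divide_distrib[symmetric])
    have "t = t powr 1" using t01 x y by (simp add: t_def)
    also have "\<dots> \<le> t powr s" by (rule powr_mono'[OF True t01])
    finally have ts: "t \<le> t powr s" .
    have "r = r powr 1" using r01 x y by (simp add: r_def)
    also have "\<dots> \<le> r powr s" by (rule powr_mono'[OF True r01])
    finally have rs: "r \<le> r powr s" .
    have xe: "x = t * (x + y)" and ye: "y = r * (x + y)" using x y by (simp_all add: t_def r_def)
    have "x powr s + y powr s = (t powr s + r powr s) * (x + y) powr s"
      using t01 r01 x y by (subst xe, subst ye) (simp add: powr_mult distrib_right)
    also have "\<dots> \<ge> (t + r) * (x + y) powr s"
      using ts rs by (intro mult_right_mono) auto
    finally show ?thesis using tr K by simp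
  next
    case False
    then have s1: "1 \<le> s" by simp
    have K: "K_const s = 2 powr (s - 1)" using False by (simp add: K_const_def)
    have "((1 - 1/2) *\<^sub>R x + (1/2) *\<^sub>R y) powr s \<le> (1 - 1/2) * x powr s + (1/2) * y powr s"
      by (rule convex_onD[OF powr_convex[OF s1]]) (use x y in auto)
    then have c: "((x + y) / 2) powr s \<le> (x powr s + y powr s) / 2"
      by (simp add: field_simps)
    have "(x + y) powr s = 2 powr s * ((x + y) / 2) powr s"
      using x y by (simp add: powr_divide)
    also have "\<dots> \<le> 2 powr s * ((x powr s + y powr s) / 2)"
      using c by (intro mult_left_mono) auto
    also have "\<dots> = 2 powr (s - 1) * (x powr s + y powr s)"
      by (simp add: powr_diff)
    finally show ?thesis using K by simp
  qed
qed

lemma K_pos: "K_const s > 0"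
  by (simp add: K_const_def)

lemma W_conv:
  assumes s: "s \<ge> 0" and lam: "lam \<ge> 0"
  shows "W s lam n \<le> K_const s * (W s lam m * W 0 lam (n - m) + W 0 lam m * W s lam (n - m))"
proof -
  define x where "x = 1 + real_of_int \<bar>m\<bar>"
  define y where "y = 1 + real_of_int \<bar>n - m\<bar>"
  have x0: "x > 0" and y0: "y > 0" by (auto simp: x_def y_def)
  have nxy: "1 + real_of_int \<bar>n\<bar> \<le> x + y" unfolding x_def y_def by linarith
  have P: "(1 + real_of_int \<bar>n\<bar>) powr s \<le> K_const s * (x powr s + y powr s)"
  proof -
    have "(1 + real_of_int \<bar>n\<bar>) powr s \<le> (x + y) powr s"
      by (rule powr_mono2[OF s]) (use nxy in auto)
    then show ?thesis using powr_sum_le[OF x0 y0 s] by linarith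
  qed
  have E: "exp (lam * real_of_int \<bar>n\<bar>) \<le> exp (lam * real_of_int \<bar>m\<bar>) * exp (lam * real_of_int \<bar>n - m\<bar>)"
  proof -
    have "\<bar>n\<bar> \<le> \<bar>m\<bar> + \<bar>n - m\<bar>" by linarith
    then have "lam * real_of_int \<bar>n\<bar> \<le> lam * real_of_int \<bar>m\<bar> + lam * real_of_int \<bar>n - m\<bar>"
      using lam by (simp add: distrib_left[symmetric] mult_left_mono)
    then show ?thesis by (simp add: exp_add[symmetric])
  qed
  have "W s lam n \<le> K_const s * (x powr s + y powr s) * (exp (lam * real_of_int \<bar>m\<bar>) * exp (lam * real_of_int \<bar>n - m\<bar>))"
    unfolding W_def by (rule mult_mono[OF P E]) (use K_pos[of s] in \<open>auto intro!: mult_nonneg_nonneg add_nonneg_nonneg less_imp_le\<close>)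
  also have "\<dots> = K_const s * (W s lam m * W 0 lam (n - m) + W 0 lam m * W s lam (n - m))"
  proof -
    have "W s lam m = x powr s * exp (lam * real_of_int \<bar>m\<bar>)" by (simp add: W_def x_def)
    moreover have "W s lam (n - m) = y powr s * exp (lam * real_of_int \<bar>n - m\<bar>)" by (simp add: W_def y_def)
    ultimately show ?thesis by (simp add: W0 algebra_simps)
  qed
  finally show ?thesis .
qed

lemma PW:
  assumes s: "s \<ge> 0" and lam: "lam \<ge> 0"
  shows "ennreal (W s lam n * (cmod (b m) * cmod (c (n - m)))) \<le>
     ennreal (K_const s) * (ennreal (W s lam m * cmod (b m)) * ennreal (W 0 lam (n - m) * cmod (c (n - m)))
                          + ennreal (W 0 lam m * cmod (b m)) * ennreal (W s lam (n - m) * cmod (c (n - m))))"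
proof -
  define P where "P = cmod (b m) * cmod (c (n - m))"
  have P0: "P \<ge> 0" by (simp add: P_def)
  have Wp: "W a lam k \<ge> 0" for a k using W_pos[of a lam k] by simp
  have Kp: "K_const s \<ge> 0" using K_pos[of s] by simp
  have "W s lam n * P \<le> K_const s * (W s lam m * W 0 lam (n - m) + W 0 lam m * W s lam (n - m)) * P"
    by (rule mult_right_mono[OF W_conv[OF s lam] P0])
  also have "\<dots> = K_const s * ((W s lam m * cmod (b m)) * (W 0 lam (n - m) * cmod (c (n - m)))
                          + (W 0 lam m * cmod (b m)) * (W s lam (n - m) * cmod (c (n - m))))"
    by (simp add: P_def algebra_simps)
  finally have r: "W s lam n * P \<le> \<dots>" .
  have "ennreal (K_const s * ((W s lam m * cmod (b m)) * (W 0 lam (n - m) * cmod (c (n - m)))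
                          + (W 0 lam m * cmod (b m)) * (W s lam (n - m) * cmod (c (n - m))))) =
     ennreal (K_const s) * (ennreal (W s lam m * cmod (b m)) * ennreal (W 0 lam (n - m) * cmod (c (n - m)))
                          + ennreal (W 0 lam m * cmod (b m)) * ennreal (W s lam (n - m) * cmod (c (n - m))))"
    using Kp Wp by (simp add: ennreal_mult ennreal_plus[symmetric] mult_nonneg_nonneg)
  then show ?thesis using ennreal_leI[OF r] by (simp add: P_def)
qed

lemma wn_conv:
  fixes b c d :: "int \<Rightarrow> complex"
  assumes s: "s \<ge> 0" and lam: "lam \<ge> 0" and b: "asum b" and cB: "\<And>m. norm (c m) \<le> B"
    and d: "\<And>n. (\<lambda>k. b (int_decode k) * c (n - int_decode k)) sums d n"
  shows "wn s lam d \<le> ennreal (K_const s) * (wn s lam b * wn 0 lam c + wn 0 lam b * wn s lam c)"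
proof -
  define K where "K = ennreal (K_const s)"
  define X1 where "X1 m = ennreal (W s lam m * cmod (b m))" for m
  define X2 where "X2 m = ennreal (W 0 lam m * cmod (b m))" for m
  define Y1 where "Y1 m = ennreal (W 0 lam m * cmod (c m))" for m
  define Y2 where "Y2 m = ennreal (W s lam m * cmod (c m))" for m
  define F where "F n m = K * (X1 m * Y1 (n - m) + X2 m * Y2 (n - m))" for n m
  have Wp: "W a lam k \<ge> 0" for a k using W_pos[of a lam k] by simp
  have X1e: "X1 = (\<lambda>m. ennreal (W s lam m * cmod (b m)))" by (rule ext) (simp add: X1_def)
  have X2e: "X2 = (\<lambda>m. ennreal (W 0 lam m * cmod (b m)))" by (rule ext) (simp add: X2_def)
  have Y1e: "Y1 = (\<lambda>m. ennreal (W 0 lam m * cmod (c m)))" by (rule ext) (simp add: Y1_def)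
  have Y2e: "Y2 = (\<lambda>m. ennreal (W s lam m * cmod (c m)))" by (rule ext) (simp add: Y2_def)
  have step1: "ennreal (W s lam n * cmod (d n)) \<le> (\<integral>\<^sup>+m. F n m \<partial>count_space UNIV)" for n
  proof -
    have sm: "summable (\<lambda>k. norm (b (int_decode k) * c (n - int_decode k)))"
    proof (rule summable_comparison_test[OF _ summable_mult2[OF b, of B]])
      show "\<exists>N. \<forall>k\<ge>N. norm (norm (b (int_decode k) * c (n - int_decode k))) \<le> norm (b (int_decode k)) * B"
        using cB by (auto simp: norm_mult intro!: mult_left_mono)
    qed
    have "cmod (d n) \<le> (\<Sum>k. norm (b (int_decode k) * c (n - int_decode k)))"
      using summable_norm[OF sm] sums_unique[OF d[of n]] by simp
    then have "W s lam n * cmod (d n) \<le> W s lam n * (\<Sum>k. norm (b (int_decode k) * c (n - int_decode k)))"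
      using Wp by (intro mult_left_mono) auto
    also have "\<dots> = (\<Sum>k. W s lam n * norm (b (int_decode k) * c (n - int_decode k)))"
      by (rule suminf_mult[OF sm, symmetric])
    finally have "ennreal (W s lam n * cmod (d n)) \<le> ennreal (\<Sum>k. W s lam n * norm (b (int_decode k) * c (n - int_decode k)))"
      by (rule ennreal_leI)
    also have "\<dots> = (\<Sum>k. ennreal (W s lam n * norm (b (int_decode k) * c (n - int_decode k))))"
      by (rule suminf_ennreal2[symmetric]) (use Wp summable_mult[OF sm] in auto)
    also have "\<dots> \<le> (\<Sum>k. F n (int_decode k))"
    proof (rule suminf_le)
      fix k
      show "ennreal (W s lam n * norm (b (int_decode k) * c (n - int_decode k))) \<le> F n (int_decode k)"
        using PW[OF s lam, of n b "int_decode k" c]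
        by (simp add: F_def K_def X1_def X2_def Y1_def Y2_def norm_mult)
    qed auto
    also have "\<dots> = (\<integral>\<^sup>+m. F n m \<partial>count_space UNIV)" by (rule BR)
    finally show ?thesis .
  qed
  have inner: "(\<integral>\<^sup>+n. F n m \<partial>count_space UNIV) = K * (X1 m * wn 0 lam c + X2 m * wn s lam c)" for m
  proof -
    have "(\<integral>\<^sup>+n. F n m \<partial>count_space UNIV) = K * (\<integral>\<^sup>+n. X1 m * Y1 (n - m) + X2 m * Y2 (n - m) \<partial>count_space UNIV)"
      unfolding F_def by (rule nn_integral_cmult) simp
    also have "(\<integral>\<^sup>+n. X1 m * Y1 (n - m) + X2 m * Y2 (n - m) \<partial>count_space UNIV) =
        (\<integral>\<^sup>+n. X1 m * Y1 (n - m) \<partial>count_space UNIV) + (\<integral>\<^sup>+n. X2 m * Y2 (n - m) \<partial>count_space UNIV)"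
      by (rule nn_integral_add) auto
    also have "(\<integral>\<^sup>+n. X1 m * Y1 (n - m) \<partial>count_space UNIV) = X1 m * (\<integral>\<^sup>+n. Y1 (n - m) \<partial>count_space UNIV)"
      by (rule nn_integral_cmult) simp
    also have "(\<integral>\<^sup>+n. X2 m * Y2 (n - m) \<partial>count_space UNIV) = X2 m * (\<integral>\<^sup>+n. Y2 (n - m) \<partial>count_space UNIV)"
      by (rule nn_integral_cmult) simp
    also have "(\<integral>\<^sup>+n. Y1 (n - m) \<partial>count_space UNIV) = wn 0 lam c"
      unfolding shift_int by (simp add: Y1e wn_def)
    also have "(\<integral>\<^sup>+n. Y2 (n - m) \<partial>count_space UNIV) = wn s lam c"
      unfolding shift_int by (simp add: Y2e wn_def)
    finally show ?thesis .
  qed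
  have "wn s lam d \<le> (\<integral>\<^sup>+n. (\<integral>\<^sup>+m. F n m \<partial>count_space UNIV) \<partial>count_space UNIV)"
    unfolding wn_def by (rule nn_integral_mono) (rule step1)
  also have "\<dots> = (\<integral>\<^sup>+m. (\<integral>\<^sup>+n. F n m \<partial>count_space UNIV) \<partial>count_space UNIV)"
    by (rule swap_int)
  also have "\<dots> = (\<integral>\<^sup>+m. K * (X1 m * wn 0 lam c + X2 m * wn s lam c) \<partial>count_space UNIV)"
    by (simp add: inner)
  also have "\<dots> = K * (\<integral>\<^sup>+m. X1 m * wn 0 lam c + X2 m * wn s lam c \<partial>count_space UNIV)"
    by (rule nn_integral_cmult) simp
  also have "(\<integral>\<^sup>+m. X1 m * wn 0 lam c + X2 m * wn s lam c \<partial>count_space UNIV) =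
      (\<integral>\<^sup>+m. X1 m * wn 0 lam c \<partial>count_space UNIV) + (\<integral>\<^sup>+m. X2 m * wn s lam c \<partial>count_space UNIV)"
    by (rule nn_integral_add) auto
  also have "(\<integral>\<^sup>+m. X1 m * wn 0 lam c \<partial>count_space UNIV) = (\<integral>\<^sup>+m. X1 m \<partial>count_space UNIV) * wn 0 lam c"
    by (rule nn_integral_multc) simp
  also have "(\<integral>\<^sup>+m. X2 m * wn s lam c \<partial>count_space UNIV) = (\<integral>\<^sup>+m. X2 m \<partial>count_space UNIV) * wn s lam c"
    by (rule nn_integral_multc) simp
  also have "(\<integral>\<^sup>+m. X1 m \<partial>count_space UNIV) = wn s lam b" by (simp add: X1e wn_def)
  also have "(\<integral>\<^sup>+m. X2 m \<partial>count_space UNIV) = wn 0 lam b" by (simp add: X2e wn_def)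
  finally show ?thesis by (simp add: K_def)
qed

lemma gchoose_rec: "((x::real) gchoose (Suc k)) = (x gchoose k) * ((x - of_nat k) / (of_nat k + 1))"
proof -
  have "((x - 1) + 1) gchoose (Suc k) = x * (x - 1 gchoose k) / (1 + of_nat k)"
    by (subst gbinomial_factors) simp
  moreover have "x * (x - 1 gchoose k) = (x - of_nat k) * (x gchoose k)"
    by (rule gbinomial_absorb_comp [symmetric])
  ultimately show ?thesis by (simp add: algebra_simps)
qed

definition cG :: "nat \<Rightarrow> real" where
  "cG k = (if k = 0 then 0 else ((- (3/2)) gchoose k))"

lemma gch_bound: "\<bar>(- (3/2::real)) gchoose k\<bar> \<le> real k + 1"
proof (induction k)
  case 0
  then show ?case by simp
next
  case (Suc k)
  have "\<bar>(- (3/2::real)) gchoose Suc k\<bar> = \<bar>(- (3/2::real)) gchoose k\<bar> * ((real k + 3/2) / (real k + 1))"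
    by (simp add: gchoose_rec abs_mult abs_divide)
  also have "\<dots> \<le> (real k + 1) * ((real k + 3/2) / (real k + 1))"
    by (rule mult_right_mono[OF Suc]) auto
  also have "\<dots> = real k + 3/2" by simp
  finally show ?case by simp
qed

lemma cG_bound: "\<bar>cG k\<bar> \<le> real k + 1"
  using gch_bound[of k] by (simp add: cG_def)

lemma cG0: "cG 0 = 0" by (simp add: cG_def)

lemma G_sums:
  assumes "\<bar>x\<bar> < 1"
  shows "(\<lambda>k. cG k * x ^ k) sums G_fun x"
proof -
  have 1: "(\<lambda>k. ((- (3/2)) gchoose k) * x ^ k) sums (1 + x) powr (- (3/2))"
    by (rule gen_binomial_real[OF assms])
  have 2: "(\<lambda>k. if k = 0 then 1 else 0) sums (1::real)"
    using sums_single[of 0 "\<lambda>_. 1::real"] by simp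
  have "(\<lambda>k. ((- (3/2)) gchoose k) * x ^ k - (if k = 0 then 1 else 0)) sums ((1 + x) powr (- (3/2)) - 1)"
    by (rule sums_diff[OF 1 2])
  moreover have "(\<lambda>k. ((- (3/2)) gchoose k) * x ^ k - (if k = 0 then 1 else 0)) = (\<lambda>k. cG k * x ^ k)"
    by (auto simp: fun_eq_iff cG_def)
  moreover have "(1 + x) powr (- (3/2)) - 1 = G_fun x"
    by (simp add: G_fun_def powr_minus_divide)
  ultimately show ?thesis by simp
qed

lemma pow32: "real k + 2 \<le> 2 * (3/2) ^ k"
proof (induction k)
  case 0 then show ?case by simp
next
  case (Suc k)
  have "real (Suc k) + 2 \<le> (3/2) * (real k + 2)" by simp
  also have "\<dots> \<le> (3/2) * (2 * (3/2) ^ k)" using Suc by simp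
  finally show ?case by simp
qed

lemma pow2: "(real j + 1) * (real j + 2) \<le> 3 * 2 ^ j"
proof (induction j)
  case 0 then show ?case by simp
next
  case (Suc j)
  show ?case
  proof (cases "j = 0")
    case True then show ?thesis by simp
  next
    case False
    then have j1: "real j \<ge> 1" by simp
    have jj: "real j * real j \<ge> 1" using mult_mono[OF j1 j1] by simp
    have e1: "(real (Suc j) + 1) * (real (Suc j) + 2) = real j * real j + 5 * real j + 6" by (simp add: algebra_simps)
    have e2: "2 * ((real j + 1) * (real j + 2)) = 2 * (real j * real j) + 6 * real j + 4" by (simp add: algebra_simps)
    have "(real (Suc j) + 1) * (real (Suc j) + 2) \<le> 2 * ((real j + 1) * (real j + 2))"
      unfolding e1 e2 using jj j1 by linarith
    also have "\<dots> \<le> 2 * (3 * 2 ^ j)" using Suc by simp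
    finally show ?thesis by simp
  qed
qed

lemma cG_summable:
  assumes "0 \<le> r" "r \<le> 1/2"
  shows "summable (\<lambda>k. \<bar>cG k\<bar> * r ^ k)"
proof (rule summable_comparison_test[of _ "\<lambda>k. 2 * (3/4) ^ k"])
  show "summable (\<lambda>k. 2 * (3/4::real) ^ k)" by (intro summable_mult summable_geometric) simp
  show "\<exists>N. \<forall>k\<ge>N. norm (\<bar>cG k\<bar> * r ^ k) \<le> 2 * (3 / 4) ^ k"
  proof (intro exI allI impI)
    fix k :: nat
    have "norm (\<bar>cG k\<bar> * r ^ k) = \<bar>cG k\<bar> * r ^ k" using assms by simp
    also have "\<dots> \<le> (real k + 1) * (1/2) ^ k"
      using assms by (intro mult_mono cG_bound power_mono) auto
    also have "\<dots> \<le> (2 * (3/2) ^ k) * (1/2) ^ k"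
      using pow32[of k] by (intro mult_right_mono) auto
    also have "\<dots> = 2 * (3/4) ^ k" by (simp add: power_mult_distrib[symmetric])
    finally show "norm (\<bar>cG k\<bar> * r ^ k) \<le> 2 * (3 / 4) ^ k" .
  qed
qed

lemma G_bound:
  assumes "\<bar>x\<bar> \<le> r" "r \<le> 1/2"
  shows "\<bar>G_fun x\<bar> \<le> (\<Sum>k. \<bar>cG k\<bar> * r ^ k)"
proof -
  have r0: "0 \<le> r" using assms by simp
  have s: "summable (\<lambda>k. \<bar>cG k\<bar> * r ^ k)" by (rule cG_summable[OF r0 assms(2)])
  have le: "\<bar>cG k * x ^ k\<bar> \<le> \<bar>cG k\<bar> * r ^ k" for k
    using assms by (simp add: abs_mult power_abs) (intro mult_left_mono power_mono, auto)
  have sa: "summable (\<lambda>k. \<bar>cG k * x ^ k\<bar>)"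
    by (rule summable_comparison_test[OF _ s]) (use le in auto)
  have "G_fun x = (\<Sum>k. cG k * x ^ k)" using G_sums[of x] assms by (simp add: sums_iff)
  then have "\<bar>G_fun x\<bar> \<le> (\<Sum>k. \<bar>cG k * x ^ k\<bar>)" using summable_rabs[OF sa] by simp
  also have "\<dots> \<le> (\<Sum>k. \<bar>cG k\<bar> * r ^ k)" by (rule suminf_le[OF le sa s])
  finally show ?thesis .
qed

lemma G_fun_0: "G_fun 0 = 0" by (simp add: G_fun_def)

lemma G_fun_measurable[measurable]: "G_fun \<in> borel_measurable borel"
  unfolding G_fun_def[abs_def] by measurable

lemma CFB:
  assumes F: "set_integrable lborel II F" and B: "\<And>x. norm (F x) \<le> B"
  shows "norm (cf F n) \<le> B"
proof -
  have e: "norm (exp (- \<i> * of_int n * of_real x)) = 1" for x :: real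
  proof -
    have "- \<i> * of_int n * of_real x = \<i> * of_real (- (of_int n * x))" by simp
    then show ?thesis by (metis norm_exp_i_times)
  qed
  have si: "set_integrable lborel II (\<lambda>x. F x * exp (- \<i> * of_int n * of_real x))"
    by (rule set_integrable_mult_bounded[OF F, where B=1]) (auto simp: e)
  have "norm (LINT x:II|lborel. F x * exp (- \<i> * of_int n * of_real x)) \<le> (LINT x:II|lborel. norm (F x * exp (- \<i> * of_int n * of_real x)))"
    by (rule set_integral_norm_bound[OF si])
  also have "\<dots> \<le> (LINT x:II|lborel. B)"
  proof (rule set_integral_mono)
    show "set_integrable lborel II (\<lambda>x. norm (F x * exp (- \<i> * of_int n * of_real x)))"
      using si by (rule set_integrable_norm)
    show "set_integrable lborel II (\<lambda>x. B)"
      by (rule set_integrable_bounded[where B="\<bar>B\<bar>"]) (auto simp: set_borel_measurable_def)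
  qed (simp add: norm_mult e B)
  also have "\<dots> = 2 * pi * B" by (subst set_integral_const) auto
  finally have N: "norm (LINT x:II|lborel. F x * exp (- \<i> * of_int n * of_real x)) \<le> 2 * pi * B" .
  have "norm (cf F n) = (1/(2*pi)) * norm (LINT x:II|lborel. F x * exp (- \<i> * of_int n * of_real x))"
    unfolding cf_def norm_mult norm_of_real by simp
  also have "\<dots> \<le> (1/(2*pi)) * (2 * pi * B)" by (rule mult_left_mono[OF N]) simp
  also have "\<dots> = B" by simp
  finally show ?thesis .
qed

lemma cf_diff:
  assumes F: "set_integrable lborel II F" and G: "set_integrable lborel II G"
  shows "cf (\<lambda>x. F x - G x) n = cf F n - cf G n"
proof -
  have e: "norm (exp (- \<i> * of_int n * of_real x)) = 1" for x :: real
  proof -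
    have "- \<i> * of_int n * of_real x = \<i> * of_real (- (of_int n * x))" by simp
    then show ?thesis by (metis norm_exp_i_times)
  qed
  have s1: "set_integrable lborel II (\<lambda>x. F x * exp (- \<i> * of_int n * of_real x))"
    by (rule set_integrable_mult_bounded[OF F, where B=1]) (auto simp: e)
  have s2: "set_integrable lborel II (\<lambda>x. G x * exp (- \<i> * of_int n * of_real x))"
    by (rule set_integrable_mult_bounded[OF G, where B=1]) (auto simp: e)
  have "(\<lambda>x. (F x - G x) * exp (- \<i> * of_int n * of_real x)) = (\<lambda>x. F x * exp (- \<i> * of_int n * of_real x) - G x * exp (- \<i> * of_int n * of_real x))"
    by (simp add: fun_eq_iff left_diff_distrib)
  then show ?thesis unfolding cf_def using set_integral_diff(2)[OF s1 s2]
    by (simp add: right_diff_distrib)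
qed

lemma SS_pow_int:
  assumes a: "asum a"
  shows "set_integrable lborel II (\<lambda>x. SS a x ^ k)"
proof (rule set_integrable_bounded[where B="(\<Sum>j. norm (a (int_decode j))) ^ k"])
  show "set_borel_measurable lborel II (\<lambda>x. SS a x ^ k)"
    unfolding set_borel_measurable_def by measurable
  show "AE x in lborel. x \<in> II \<longrightarrow> norm (SS a x ^ k) \<le> (\<Sum>j. norm (a (int_decode j))) ^ k"
    using norm_SS[OF a] by (auto simp: norm_power intro!: power_mono)
qed auto

lemma cp_bound:
  assumes a: "asum a"
  shows "norm (cf (\<lambda>x. SS a x ^ k) n) \<le> (\<Sum>j. norm (a (int_decode j))) ^ k"
  by (rule CFB[OF SS_pow_int[OF a]]) (use norm_SS[OF a] in \<open>auto simp: norm_power intro!: power_mono\<close>)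

lemma cp_rec:
  assumes a: "asum a"
  shows "(\<lambda>j. a (int_decode j) * cf (\<lambda>x. SS a x ^ k) (n - int_decode j)) sums cf (\<lambda>x. SS a x ^ Suc k) n"
proof -
  have eq: "(\<lambda>x. SS a x ^ Suc k) = (\<lambda>x. SS a x ^ k * SS a x)" by (simp add: fun_eq_iff mult.commute)
  show ?thesis unfolding eq by (rule cf_mult_SS(2)[OF SS_pow_int[OF a, of k] a, of n])
qed

lemma coeff_series:
  fixes v :: "real \<Rightarrow> real" and a :: "int \<Rightarrow> complex"
  assumes v: "set_integrable lborel II v"
    and a: "asum a" and r: "(\<Sum>k. norm (a (int_decode k))) \<le> 1/2"
    and vS: "AE x in lborel. x \<in> II \<longrightarrow> complex_of_real (v x) = SS a x"
  shows "(\<lambda>k. complex_of_real (cG k) * cf (\<lambda>x. SS a x ^ k) n) sums cf (\<lambda>x. complex_of_real (G_fun (v x))) n"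
proof -
  define r where "r = (\<Sum>k. norm (a (int_decode k)))"
  have r0: "0 \<le> r" unfolding r_def by (intro suminf_nonneg a) auto
  have rh: "r \<le> 1/2" using r by (simp add: r_def)
  define e where "e x = exp (- \<i> * of_int n * of_real x)" for x :: real
  have e1: "norm (e x) = 1" for x
  proof -
    have "- \<i> * of_int n * of_real x = \<i> * of_real (- (of_int n * x))" by simp
    then show ?thesis unfolding e_def by (metis norm_exp_i_times)
  qed
  define f where "f k x = complex_of_real (cG k) * (SS a x ^ k * e x)" for k x
  have meas: "set_borel_measurable lborel II (f k)" for k
    unfolding set_borel_measurable_def f_def e_def by measurable
  have h: "set_integrable lborel II (\<lambda>_. 1::real)"
    by (rule set_integrable_bounded[where B=1]) (auto simp: set_borel_measurable_def)
  have bnd: "AE x in lborel. x \<in> II \<longrightarrow> norm (f k x) \<le> (\<bar>cG k\<bar> * r ^ k) * 1" for k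
  proof (rule AE_I2, rule impI)
    fix x
    have "norm (SS a x) ^ k \<le> r ^ k" using norm_SS[OF a, of x] by (intro power_mono) (auto simp: r_def)
    then show "norm (f k x) \<le> (\<bar>cG k\<bar> * r ^ k) * 1"
      by (auto simp: f_def norm_mult e1 norm_power intro!: mult_left_mono)
  qed
  have c0: "\<And>k. 0 \<le> \<bar>cG k\<bar> * r ^ k" using r0 by simp
  note GI = set_integral_suminf[OF meas h bnd cG_summable[OF r0 rh] c0]
  have intf: "(LINT x:II|lborel. f k x) = of_real (2*pi) * (of_real (cG k) * cf (\<lambda>x. SS a x ^ k) n)" for k
    unfolding f_def e_def by (simp only: set_integral_mult_right cf_int) simp
  have vm: "(\<lambda>x. indicat_real II x * v x) \<in> borel_measurable lborel"
    using v unfolding set_integrable_def by (auto dest: borel_measurable_integrable)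
  have sumf: "AE x in lborel. indicat_real II x *\<^sub>R (\<Sum>k. f k x) = indicat_real II x *\<^sub>R (complex_of_real (G_fun (v x)) * e x)"
    using vS
  proof eventually_elim
    case (elim x)
    show ?case
    proof (cases "x \<in> II")
      case True
      then have vx: "complex_of_real (v x) = SS a x" using elim by simp
      have "\<bar>v x\<bar> \<le> r" using norm_SS[OF a, of x] vx by (simp add: r_def) (metis norm_of_real)
      then have "\<bar>v x\<bar> < 1" using rh by simp
      then have "(\<lambda>k. cG k * v x ^ k) sums G_fun (v x)" by (rule G_sums)
      then have "(\<lambda>k. complex_of_real (cG k * v x ^ k)) sums complex_of_real (G_fun (v x))"
        by (simp only: sums_of_real_iff)
      then have "(\<lambda>k. complex_of_real (cG k) * SS a x ^ k) sums complex_of_real (G_fun (v x))"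
        using vx by simp
      then have "(\<lambda>k. complex_of_real (cG k) * SS a x ^ k * e x) sums (complex_of_real (G_fun (v x)) * e x)"
        by (rule sums_mult2)
      then have "(\<Sum>k. f k x) = complex_of_real (G_fun (v x)) * e x"
        by (simp add: f_def sums_iff mult.assoc)
      then show ?thesis by simp
    next
      case False
      then show ?thesis by simp
    qed
  qed
  have m1: "(\<lambda>x. indicat_real II x *\<^sub>R (\<Sum>k. f k x)) \<in> borel_measurable lborel"
    unfolding f_def e_def by measurable
  have eqm: "(\<lambda>x. indicat_real II x *\<^sub>R (complex_of_real (G_fun (v x)) * e x)) =
      (\<lambda>x. complex_of_real (G_fun (indicat_real II x * v x)) * e x)"
    by (auto simp: fun_eq_iff indicator_def G_fun_0)
  have m2: "(\<lambda>x. indicat_real II x *\<^sub>R (complex_of_real (G_fun (v x)) * e x)) \<in> borel_measurable lborel"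
  proof -
    have gm: "(\<lambda>x. G_fun (indicat_real II x * v x)) \<in> borel_measurable lborel"
      by (rule measurable_compose[OF vm]) simp
    have gm2: "(\<lambda>x. complex_of_real (G_fun (indicat_real II x * v x))) \<in> borel_measurable lborel"
      by (rule measurable_compose[OF gm borel_measurable_of_real])
    have em: "e \<in> borel_measurable lborel"
    proof -
      have "continuous_on UNIV e" unfolding e_def by (intro continuous_intros)
      then have "e \<in> borel_measurable borel" by (rule borel_measurable_continuous_onI)
      then show ?thesis by simp
    qed
    show ?thesis unfolding eqm by (rule borel_measurable_times[OF gm2 em])
  qed
  have "(LINT x:II|lborel. (\<Sum>k. f k x)) = (LINT x:II|lborel. complex_of_real (G_fun (v x)) * e x)"
    unfolding set_lebesgue_integral_def by (rule integral_cong_AE[OF m1 m2 sumf])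
  also have "\<dots> = of_real (2*pi) * cf (\<lambda>x. complex_of_real (G_fun (v x))) n"
    unfolding e_def by (rule cf_int)
  finally have "(\<lambda>k. of_real (2*pi) * (of_real (cG k) * cf (\<lambda>x. SS a x ^ k) n)) sums (of_real (2*pi) * cf (\<lambda>x. complex_of_real (G_fun (v x))) n)"
    using GI(2) unfolding intf by simp
  then have "(\<lambda>k. complex_of_real (1/(2*pi)) * (of_real (2*pi) * (of_real (cG k) * cf (\<lambda>x. SS a x ^ k) n))) sums (complex_of_real (1/(2*pi)) * (of_real (2*pi) * cf (\<lambda>x. complex_of_real (G_fun (v x))) n))"
    by (rule sums_mult)
  then show ?thesis by (simp add: field_simps)
qed

theorem lemma3p4:
  fixes s lam :: real and v :: "real \<Rightarrow> real"
  assumes "s \<ge> 0" and "lam \<ge> 0"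
    and "in_L1_torus v" and "wiener_norm s lam v < \<infinity>"
    and "ennreal (4 * K_const s) * wiener_norm 0 lam v < 1"
  shows "in_L1_torus (\<lambda>x. G_fun (v x)) \<and>
         wiener_norm s lam (\<lambda>x. G_fun (v x)) \<le> ennreal (18 * K_const s) * wiener_norm s lam v"
proof -
  note s = assms(1) and lam = assms(2)
  define a where "a = fourier_coeff v"
  define K where "K = K_const s"
  have Kp: "K > 0" unfolding K_def by (rule K_pos)
  have Ks: "K \<ge> 1" if "s > 0"
  proof (cases "s \<le> 1")
    case True then show ?thesis using that by (simp add: K_def K_const_def)
  next
    case False then show ?thesis using that by (simp add: K_def K_const_def ge_one_powr_ge_zero)
  qed
  have K0: "K = 1/2" if "s = 0" using that by (simp add: K_def K_const_def powr_minus)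
  have Kh: "K \<ge> 1/2" using Ks K0 s by (cases "s = 0") force+
  have w0fin: "wiener_norm 0 lam v < top"
  proof (rule ccontr)
    assume "\<not> wiener_norm 0 lam v < top"
    then have "wiener_norm 0 lam v = top" by (simp add: less_top[symmetric])
    moreover have "ennreal (4 * K_const s) \<noteq> 0" using Kp by (simp add: K_def)
    ultimately have "ennreal (4 * K_const s) * wiener_norm 0 lam v = top" by (simp add: ennreal_mult_top)
    then show False using assms(5) by simp
  qed
  obtain \<alpha> where \<alpha>: "wn 0 lam a = ennreal \<alpha>" "\<alpha> \<ge> 0"
    using w0fin unfolding a_def wiener_norm_wn less_top_ennreal by blast
  obtain \<beta> where \<beta>: "wn s lam a = ennreal \<beta>" "\<beta> \<ge> 0"
    using assms(4) unfolding a_def wiener_norm_wn less_top_ennreal infinity_ennreal_def by blast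
  have "ennreal (4 * K * \<alpha>) < ennreal 1"
    using assms(5) \<alpha> Kp unfolding K_def a_def wiener_norm_wn by (simp add: ennreal_mult)
  then have h\<alpha>: "4 * K * \<alpha> < 1" using Kp \<alpha>(2) by (subst (asm) ennreal_less_iff) auto
  have \<alpha>h: "\<alpha> < 1/2"
  proof -
    have "2 * \<alpha> \<le> 4 * K * \<alpha>" using Kh \<alpha>(2) by (intro mult_right_mono) auto
    then show ?thesis using h\<alpha> by simp
  qed
  have W1: "W 0 lam n \<ge> 1" for n using lam by (simp add: W0)
  have sumle: "(\<Sum>k. ennreal (norm (a (int_decode k)))) \<le> ennreal \<alpha>"
  proof -
    have "(\<Sum>k. ennreal (norm (a (int_decode k)))) = (\<integral>\<^sup>+m. ennreal (norm (a m)) \<partial>count_space UNIV)"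
      by (rule BR)
    also have "\<dots> \<le> wn 0 lam a"
      unfolding wn_def
    proof (rule nn_integral_mono, rule ennreal_leI)
      fix m
      show "norm (a m) \<le> W 0 lam m * cmod (a m)"
        using W1[of m] by (simp add: mult_le_cancel_right1)
    qed
    finally show ?thesis using \<alpha> by simp
  qed
  have asa: "asum a"
    by (rule summable_suminf_not_top) (use sumle in \<open>auto simp: top_unique\<close>)
  define r where "r = (\<Sum>k. norm (a (int_decode k)))"
  have r0: "r \<ge> 0" unfolding r_def by (rule suminf_nonneg[OF asa]) simp
  have "(\<Sum>k. ennreal (norm (a (int_decode k)))) = ennreal r"
    unfolding r_def by (rule suminf_ennreal2) (auto intro: asa)
  then have "ennreal r \<le> ennreal \<alpha>" using sumle by simp
  then have r\<alpha>: "r \<le> \<alpha>" using \<alpha>(2) by (simp add: ennreal_le_iff)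
  have rh: "r \<le> 1/2" using r\<alpha> \<alpha>h by simp
  define S where "S = SS a"
  have vL: "set_integrable lborel II v" using assms(3) by (simp add: in_L1_torus_def)
  have vC: "set_integrable lborel II (\<lambda>x. complex_of_real (v x))"
    using integrable_of_real[OF vL[unfolded set_integrable_def]] unfolding set_integrable_def
    by (simp add: scaleR_conv_of_real)
  have SI: "set_integrable lborel II S"
    using SS_pow_int[OF asa, of 1] by (simp add: S_def)
  have cfw: "cf (\<lambda>x. complex_of_real (v x) - S x) n = 0" for n
    using cf_diff[OF vC SI, of n] cf_SS[OF asa, of n]
    by (simp add: S_def a_def fourier_coeff_cf)
  have vS: "AE x in lborel. x \<in> II \<longrightarrow> complex_of_real (v x) = SS a x"
    using cf_zero_AE[OF set_integral_diff(1)[OF vC SI] cfw] by (simp add: S_def)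
  have vb: "AE x in lborel. x \<in> II \<longrightarrow> \<bar>v x\<bar> \<le> r"
    using vS
  proof eventually_elim
    case (elim x)
    show ?case
    proof
      assume "x \<in> II"
      then have "complex_of_real (v x) = SS a x" using elim by simp
      then show "\<bar>v x\<bar> \<le> r" using norm_SS[OF asa, of x] by (simp add: r_def) (metis norm_of_real)
    qed
  qed
  have L1: "in_L1_torus (\<lambda>x. G_fun (v x))"
    unfolding in_L1_torus_def
  proof (rule set_integrable_bounded[where B="\<Sum>k. \<bar>cG k\<bar> * r ^ k"])
    have vm: "(\<lambda>x. indicat_real II x * v x) \<in> borel_measurable lborel"
      using vL unfolding set_integrable_def by (auto dest: borel_measurable_integrable)
    have "(\<lambda>x. indicat_real II x *\<^sub>R G_fun (v x)) = (\<lambda>x. G_fun (indicat_real II x * v x))"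
      by (auto simp: fun_eq_iff indicator_def G_fun_0)
    moreover have "(\<lambda>x. G_fun (indicat_real II x * v x)) \<in> borel_measurable lborel"
      by (rule measurable_compose[OF vm]) simp
    ultimately show "set_borel_measurable lborel II (\<lambda>x. G_fun (v x))"
      unfolding set_borel_measurable_def by simp
    show "AE x in lborel. x \<in> II \<longrightarrow> norm (G_fun (v x)) \<le> (\<Sum>k. \<bar>cG k\<bar> * r ^ k)"
      using vb by eventually_elim (use G_bound rh in auto)
  qed auto
  define cp where "cp k = cf (\<lambda>x. SS a x ^ k)" for k
  define FG where "FG = fourier_coeff (\<lambda>x. G_fun (v x))"
  have coeff: "(\<lambda>k. complex_of_real (cG k) * cp k n) sums FG n" for n
    using coeff_series[OF vL asa _ vS, of n] rh by (simp add: r_def cp_def FG_def fourier_coeff_cf)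
  have cpb: "norm (cp k n) \<le> r ^ k" for k n
    using cp_bound[OF asa, of k n] by (simp add: cp_def r_def)
  have cprec: "(\<lambda>j. a (int_decode j) * cp k (n - int_decode j)) sums cp (Suc k) n" for k n
    using cp_rec[OF asa, of k n] by (simp add: cp_def)
  have cp1: "cp (Suc 0) = a" by (rule ext) (simp add: cp_def cf_SS[OF asa])
  define N0 where "N0 k = wn 0 lam (cp k)" for k
  define Ns where "Ns k = wn s lam (cp k)" for k
  have conv0: "N0 (Suc k) \<le> ennreal \<alpha> * N0 k" for k
  proof -
    have "N0 (Suc k) \<le> ennreal (K_const 0) * (wn 0 lam a * wn 0 lam (cp k) + wn 0 lam a * wn 0 lam (cp k))"
      unfolding N0_def by (rule wn_conv[OF order_refl lam asa cpb cprec])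
    also have "\<dots> = ennreal \<alpha> * N0 k"
    proof -
      have "ennreal (K_const 0) * (X + X) = X" for X :: ennreal
      proof -
        have "ennreal (K_const 0) * (X + X) = ennreal (1/2) * (2 * X)"
          by (simp add: K_const_def powr_minus mult_2)
        also have "\<dots> = (ennreal (1/2) * 2) * X" by (simp add: mult.assoc)
        also have "ennreal (1/2) * 2 = 1"
        proof -
          have "ennreal (1/2) * 2 = ennreal (1/2) * ennreal 2" by simp
          also have "\<dots> = ennreal (1/2 * 2)" by (rule ennreal_mult[symmetric]) auto
          finally show ?thesis by simp
        qed
        finally show ?thesis by simp
      qed
      then show ?thesis using \<alpha> by (simp add: N0_def)
    qed
    finally show ?thesis .
  qed
  have convs: "Ns (Suc k) \<le> ennreal K * (ennreal \<beta> * N0 k + ennreal \<alpha> * Ns k)" for k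
    using wn_conv[OF s lam asa cpb cprec] \<alpha> \<beta> by (simp add: N0_def Ns_def K_def)
  have N0b: "N0 (Suc j) \<le> ennreal (\<alpha> ^ Suc j)" for j
  proof (induction j)
    case 0 then show ?case using \<alpha> by (simp add: N0_def cp1)
  next
    case (Suc j)
    have "N0 (Suc (Suc j)) \<le> ennreal \<alpha> * N0 (Suc j)" by (rule conv0)
    also have "\<dots> \<le> ennreal \<alpha> * ennreal (\<alpha> ^ Suc j)" by (rule mult_left_mono[OF Suc]) auto
    also have "\<dots> = ennreal (\<alpha> ^ Suc (Suc j))" using \<alpha>(2) by (simp add: ennreal_mult)
    finally show ?case .
  qed
  have termb: "ennreal (W s lam n * cmod (FG n)) \<le> (\<Sum>k. ennreal \<bar>cG k\<bar> * ennreal (W s lam n * cmod (cp k n)))" for n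
  proof -
    have Wp: "W s lam n \<ge> 0" using W_pos[of s lam n] by simp
    have sm: "summable (\<lambda>k. norm (complex_of_real (cG k) * cp k n))"
    proof (rule summable_comparison_test[OF _ cG_summable[OF r0 rh]])
      show "\<exists>N. \<forall>k\<ge>N. norm (norm (complex_of_real (cG k) * cp k n)) \<le> \<bar>cG k\<bar> * r ^ k"
        using cpb by (auto simp: norm_mult intro!: mult_left_mono)
    qed
    have "cmod (FG n) \<le> (\<Sum>k. norm (complex_of_real (cG k) * cp k n))"
      using summable_norm[OF sm] sums_unique[OF coeff[of n]] by simp
    then have "W s lam n * cmod (FG n) \<le> W s lam n * (\<Sum>k. norm (complex_of_real (cG k) * cp k n))"
      using Wp by (intro mult_left_mono) auto
    also have "\<dots> = (\<Sum>k. W s lam n * norm (complex_of_real (cG k) * cp k n))"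
      by (rule suminf_mult[OF sm, symmetric])
    finally have "ennreal (W s lam n * cmod (FG n)) \<le> ennreal (\<Sum>k. W s lam n * norm (complex_of_real (cG k) * cp k n))"
      by (rule ennreal_leI)
    also have "\<dots> = (\<Sum>k. ennreal (W s lam n * norm (complex_of_real (cG k) * cp k n)))"
      by (rule suminf_ennreal2[symmetric]) (use Wp summable_mult[OF sm] in auto)
    also have "\<dots> = (\<Sum>k. ennreal \<bar>cG k\<bar> * ennreal (W s lam n * cmod (cp k n)))"
      using Wp by (simp add: norm_mult ennreal_mult[symmetric] mult.left_commute)
    finally show ?thesis .
  qed
  have main: "wiener_norm s lam (\<lambda>x. G_fun (v x)) \<le> (\<Sum>k. ennreal \<bar>cG k\<bar> * Ns k)"
  proof -
    have "wiener_norm s lam (\<lambda>x. G_fun (v x)) = wn s lam FG" by (simp add: wiener_norm_wn FG_def)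
    also have "\<dots> \<le> (\<integral>\<^sup>+n. (\<Sum>k. ennreal \<bar>cG k\<bar> * ennreal (W s lam n * cmod (cp k n))) \<partial>count_space UNIV)"
      unfolding wn_def by (rule nn_integral_mono) (rule termb)
    also have "\<dots> = (\<Sum>k. (\<integral>\<^sup>+n. ennreal \<bar>cG k\<bar> * ennreal (W s lam n * cmod (cp k n)) \<partial>count_space UNIV))"
      by (rule nn_integral_suminf) simp
    also have "\<dots> = (\<Sum>k. ennreal \<bar>cG k\<bar> * Ns k)"
      by (simp add: nn_integral_cmult Ns_def wn_def)
    finally show ?thesis .
  qed
  have final: "(\<Sum>k. ennreal \<bar>cG k\<bar> * Ns k) \<le> ennreal (18 * K) * ennreal \<beta>"
  proof (cases "s = 0")
    case False
    then have s0: "s > 0" using s by simp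
    have K1: "K \<ge> 1" by (rule Ks[OF s0])
    define x where "x = K * \<alpha>"
    have x0: "x \<ge> 0" using Kp \<alpha>(2) by (simp add: x_def)
    have x4: "x \<le> 1/4" using h\<alpha> by (simp add: x_def)
    have Nsb: "Ns (Suc j) \<le> ennreal (real (Suc j) * x ^ j * \<beta>)" for j
    proof (induction j)
      case 0 then show ?case using \<beta> by (simp add: Ns_def cp1)
    next
      case (Suc j)
      have "Ns (Suc (Suc j)) \<le> ennreal K * (ennreal \<beta> * N0 (Suc j) + ennreal \<alpha> * Ns (Suc j))"
        by (rule convs)
      also have "\<dots> \<le> ennreal K * (ennreal \<beta> * ennreal (\<alpha> ^ Suc j) + ennreal \<alpha> * ennreal (real (Suc j) * x ^ j * \<beta>))"
        by (rule mult_left_mono[OF add_mono[OF mult_left_mono[OF N0b] mult_left_mono[OF Suc]]]) auto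
      also have "\<dots> = ennreal (K * (\<beta> * \<alpha> ^ Suc j + \<alpha> * (real (Suc j) * x ^ j * \<beta>)))"
        using Kp \<alpha>(2) \<beta>(2) x0 by (simp add: ennreal_mult ennreal_plus)
      also have "\<dots> \<le> ennreal (real (Suc (Suc j)) * x ^ Suc j * \<beta>)"
      proof (rule ennreal_leI)
        have "K \<le> K ^ Suc j" using K1 by (metis power_increasing power_one_right Suc_le_mono le0 One_nat_def)
        then have "K * \<alpha> ^ Suc j \<le> K ^ Suc j * \<alpha> ^ Suc j" using \<alpha>(2) by (intro mult_right_mono) auto
        also have "\<dots> = x ^ Suc j" by (simp add: x_def power_mult_distrib)
        finally have a1: "K * \<alpha> ^ Suc j \<le> x ^ Suc j" .
        have a2: "K * (\<alpha> * (real (Suc j) * x ^ j * \<beta>)) = real (Suc j) * x ^ Suc j * \<beta>"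
          by (simp add: x_def algebra_simps)
        have "K * (\<beta> * \<alpha> ^ Suc j + \<alpha> * (real (Suc j) * x ^ j * \<beta>)) = \<beta> * (K * \<alpha> ^ Suc j) + K * (\<alpha> * (real (Suc j) * x ^ j * \<beta>))"
          by (simp add: algebra_simps)
        also have "\<dots> = \<beta> * (K * \<alpha> ^ Suc j) + real (Suc j) * x ^ Suc j * \<beta>"
          by (simp only: a2)
        also have "\<dots> \<le> \<beta> * x ^ Suc j + real (Suc j) * x ^ Suc j * \<beta>"
          using a1 \<beta>(2) x0 by (intro add_mono mult_left_mono) auto
        also have "\<dots> = real (Suc (Suc j)) * x ^ Suc j * \<beta>" by (simp add: algebra_simps)
        finally show "K * (\<beta> * \<alpha> ^ Suc j + \<alpha> * (real (Suc j) * x ^ j * \<beta>)) \<le> real (Suc (Suc j)) * x ^ Suc j * \<beta>" .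
      qed
      finally show ?case .
    qed
    define g where "g k = (if k = 0 then 0 else 3 * \<beta> * (1/2) ^ (k - 1))" for k :: nat
    have gs: "g sums (6 * \<beta>)"
    proof -
      have "(\<lambda>j. 3 * \<beta> * (1/2::real) ^ j) sums (3 * \<beta> * (1 / (1 - 1/2)))"
        by (intro sums_mult geometric_sums) simp
      then have "(\<lambda>j. g (Suc j)) sums (6 * \<beta>)" by (simp add: g_def)
      then have "g sums (6 * \<beta> + g 0)" by (simp only: sums_Suc_iff)
      then show ?thesis by (simp add: g_def)
    qed
    have g0: "g k \<ge> 0" for k using \<beta>(2) by (simp add: g_def)
    have Tb: "ennreal \<bar>cG k\<bar> * Ns k \<le> ennreal (g k)" for k
    proof (cases k)
      case 0 then show ?thesis by (simp add: cG0)
    next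
      case (Suc j)
      have "ennreal \<bar>cG k\<bar> * Ns k \<le> ennreal \<bar>cG k\<bar> * ennreal (real (Suc j) * x ^ j * \<beta>)"
        unfolding Suc by (rule mult_left_mono[OF Nsb]) simp
      also have "\<dots> = ennreal (\<bar>cG k\<bar> * (real (Suc j) * x ^ j * \<beta>))"
        using x0 \<beta>(2) by (simp add: ennreal_mult[symmetric])
      also have "\<dots> \<le> ennreal (g k)"
      proof (rule ennreal_leI)
        have "\<bar>cG k\<bar> * (real (Suc j) * x ^ j * \<beta>) \<le> ((real j + 2) * (real j + 1)) * ((1/4) ^ j * \<beta>)"
        proof -
          have c: "\<bar>cG k\<bar> \<le> real j + 2" using cG_bound[of k] Suc by simp
          have "x ^ j \<le> (1/4) ^ j" using x0 x4 by (intro power_mono) auto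
          then have "x ^ j * \<beta> \<le> (1/4) ^ j * \<beta>" using \<beta>(2) by (rule mult_right_mono)
          then have "real (Suc j) * (x ^ j * \<beta>) \<le> real (Suc j) * ((1/4) ^ j * \<beta>)"
            by (rule mult_left_mono) simp
          then have "real (Suc j) * (x ^ j * \<beta>) \<le> (real j + 1) * ((1/4) ^ j * \<beta>)"
            by (simp add: add.commute)
          then have d: "real (Suc j) * x ^ j * \<beta> \<le> (real j + 1) * ((1/4) ^ j * \<beta>)"
            by (simp add: mult.assoc)
          have "\<bar>cG k\<bar> * (real (Suc j) * x ^ j * \<beta>) \<le> (real j + 2) * ((real j + 1) * ((1/4) ^ j * \<beta>))"
            by (rule mult_mono[OF c d]) (use x0 \<beta>(2) in auto)
          then show ?thesis by (simp add: mult.assoc)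
        qed
        also have "\<dots> \<le> (3 * 2 ^ j) * ((1/4) ^ j * \<beta>)"
        proof (rule mult_right_mono)
          show "(real j + 2) * (real j + 1) \<le> 3 * 2 ^ j" using pow2[of j] by (simp add: mult.commute)
          show "0 \<le> (1/4::real) ^ j * \<beta>" using \<beta>(2) by simp
        qed
        also have "\<dots> = g k"
        proof -
          have f: "(2::real) ^ j * 2 ^ j = 4 ^ j" by (simp add: power_mult_distrib[symmetric])
          show ?thesis by (simp add: g_def Suc power_divide field_simps f)
        qed
        finally show "\<bar>cG k\<bar> * (real (Suc j) * x ^ j * \<beta>) \<le> g k" .
      qed
      finally show ?thesis .
    qed
    have "(\<Sum>k. ennreal \<bar>cG k\<bar> * Ns k) \<le> (\<Sum>k. ennreal (g k))"
      by (rule suminf_le[OF Tb]) auto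
    also have "\<dots> = ennreal (6 * \<beta>)"
      using suminf_ennreal2[OF g0 sums_summable[OF gs]] sums_unique[OF gs] by simp
    also have "\<dots> \<le> ennreal (18 * K * \<beta>)"
      using K1 \<beta>(2) by (intro ennreal_leI) (simp add: mult_right_mono)
    also have "\<dots> = ennreal (18 * K) * ennreal \<beta>" using Kp \<beta>(2) by (simp add: ennreal_mult)
    finally show ?thesis .
  next
    case True
    have KK: "K = 1/2" by (rule K0[OF True])
    have \<beta>\<alpha>: "\<beta> = \<alpha>" using \<alpha> \<beta> True by (metis ennreal_inj)
    define g where "g k = (if k = 0 then 0 else 2 * \<alpha> * (3/4) ^ (k - 1))" for k :: nat
    have gs: "g sums (8 * \<alpha>)"
    proof -
      have "(\<lambda>j. 2 * \<alpha> * (3/4::real) ^ j) sums (2 * \<alpha> * (1 / (1 - 3/4)))"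
        by (intro sums_mult geometric_sums) simp
      then have "(\<lambda>j. g (Suc j)) sums (8 * \<alpha>)" by (simp add: g_def)
      then have "g sums (8 * \<alpha> + g 0)" by (simp only: sums_Suc_iff)
      then show ?thesis by (simp add: g_def)
    qed
    have g0: "g k \<ge> 0" for k using \<alpha>(2) by (simp add: g_def)
    have Tb: "ennreal \<bar>cG k\<bar> * Ns k \<le> ennreal (g k)" for k
    proof (cases k)
      case 0 then show ?thesis by (simp add: cG0)
    next
      case (Suc j)
      have "ennreal \<bar>cG k\<bar> * Ns k \<le> ennreal \<bar>cG k\<bar> * ennreal (\<alpha> ^ Suc j)"
      proof -
        have "Ns k \<le> ennreal (\<alpha> ^ Suc j)" using N0b[of j] True by (simp add: Suc Ns_def N0_def)
        then show ?thesis by (rule mult_left_mono) simp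
      qed
      also have "\<dots> = ennreal (\<bar>cG k\<bar> * \<alpha> ^ Suc j)"
        using \<alpha>(2) by (simp add: ennreal_mult[symmetric])
      also have "\<dots> \<le> ennreal (g k)"
      proof (rule ennreal_leI)
        have c: "\<bar>cG k\<bar> \<le> 2 * (3/2) ^ j" using cG_bound[of k] pow32[of j] Suc by simp
        have p: "\<alpha> ^ j \<le> (1/2) ^ j" using \<alpha>(2) \<alpha>h by (intro power_mono) auto
        have "\<bar>cG k\<bar> * \<alpha> ^ Suc j = \<bar>cG k\<bar> * (\<alpha> * \<alpha> ^ j)" by simp
        also have "\<dots> \<le> (2 * (3/2) ^ j) * (\<alpha> * (1/2) ^ j)"
        proof (rule mult_mono[OF c])
          show "\<alpha> * \<alpha> ^ j \<le> \<alpha> * (1/2) ^ j" using p \<alpha>(2) by (rule mult_left_mono)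
        qed (use \<alpha>(2) in auto)
        also have "\<dots> = g k"
        proof -
          have f: "(2::real) ^ j * 2 ^ j = 4 ^ j" by (simp add: power_mult_distrib[symmetric])
          show ?thesis by (simp add: g_def Suc power_divide field_simps f)
        qed
        finally show "\<bar>cG k\<bar> * \<alpha> ^ Suc j \<le> g k" .
      qed
      finally show ?thesis .
    qed
    have "(\<Sum>k. ennreal \<bar>cG k\<bar> * Ns k) \<le> (\<Sum>k. ennreal (g k))"
      by (rule suminf_le[OF Tb]) auto
    also have "\<dots> = ennreal (8 * \<alpha>)"
      using suminf_ennreal2[OF g0 sums_summable[OF gs]] sums_unique[OF gs] by simp
    also have "\<dots> \<le> ennreal (18 * K * \<beta>)"
      unfolding KK \<beta>\<alpha> using \<alpha>(2) by (intro ennreal_leI) simp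
    also have "\<dots> = ennreal (18 * K) * ennreal \<beta>" using Kp \<beta>(2) by (simp add: ennreal_mult)
    finally show ?thesis .
  qed
  have "wiener_norm s lam (\<lambda>x. G_fun (v x)) \<le> ennreal (18 * K_const s) * wiener_norm s lam v"
    using main final \<beta> by (simp add: K_def a_def wiener_norm_wn)
  with L1 show ?thesis by simp
qed


end
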